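(* Let $d\ge1$, $x_1<x_2$ real, $x_0\in[x_1,x_2]$. Let $p,q,r_1,\dots,r_d,s_1,\dots,s_d$ be continuous complex-valued functions on $[x_1,x_2]$, with $p$ continuously differentiable and $p(x)\ne0$, let $Ly=(py')'+qy$, $R_i[y]=r_iy+s_iy'$, and let $u_0$ be a nonvanishing solution of $Lu_0=0$ on $[x_1,x_2]$. With the generalized formal powers of the context, define for $\vec\lambda\in\mathbb C^d$ $$u_1=u_0\sum_{\mathbf n\in\mathbb Z_{\ge0}^d}\frac{1}{(2|\mathbf n|)!}\tilde X^{(2\mathbf n)}\lambda^{\mathbf n},\qquad u_2=u_0\sum_{\mathbf n\in\mathbb Z_{\ge0}^d}\frac{1}{(2|\mathbf n|+1)!}X^{(2\mathbf n+\frac1d\mathbf 1)}\lambda^{\mathbf n}.$$ Then for every fixed $\vec\lambda\in\mathbb C^d$ these series converge uniformly on $[x_1,x_2]$, and $u_1,u_2$ are linearly independent solutions of $$Ly=\sum_{i=1}^d\lambda_iR_i[y].$$ Their derivatives are given by $$u_1'=\frac{u_0'}{u_0}u_1+\frac{1}{pu_0}\sum_{\mathbf n\ge0,\ \mathbf n\ne0}\frac{1}{(2|\mathbf n|-1)!}\sum_{i=1}^d\tilde X^{(2\mathbf n-\delta_i)}\lambda^{\mathbf n},\qquad u_2'=\frac{u_0'}{u_0}u_2+\frac{1}{pu_0}\sum_{\mathbf n\ge0}\frac{1}{(2|\mathbf n|)!}\sum_{i=1}^dX^{(2\mathbf n-\delta_i+\frac1d\mathbf 1)}\lambda^{\mathbf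 n},$$ and $u_1(x_0)=u_0(x_0)$, $u_1'(x_0)=u_0'(x_0)$, $u_2(x_0)=0$, $u_2'(x_0)=\frac{1}{p(x_0)u_0(x_0)}$.
   Context: Notation: $\int f$ denotes $x\mapsto\int_{x_0}^x f(s)\,ds$; $|\mathbf j|=j_1+\cdots+j_d$; $\delta_i$ the $i$-th standard basis vector; $\mathbf 1=(1,\dots,1)$; $\lambda^{\mathbf n}=\lambda_1^{n_1}\cdots\lambda_d^{n_d}$. Generalized formal powers $\tilde X$: for $\mathbf j\in\mathbb Z^d$, admissible means at most one $j_i$ odd; $\tilde X^{(\mathbf 0)}\equiv1$; $\tilde X^{(\mathbf j)}\equiv0$ if some $j_i<0$; for admissible $\mathbf j\ge0$, $\mathbf j\ne\mathbf0$: if $|\mathbf j|$ is odd with odd entry $j_i$, $\tilde X^{(\mathbf j)}=|\mathbf j|\int u_0R_i[u_0\tilde X^{(\mathbf j-\delta_i)}]$; if $|\mathbf j|$ is even, $\tilde X^{(\mathbf j)}=|\mathbf j|\int\frac{1}{pu_0^2}\sum_{i=1}^d\tilde X^{(\mathbf j-\delta_i)}$. Generalized formal powers $X$: indexed by $\mathbf j=\mathbf m+\frac1d\mathbf 1$, $\mathbf m\in\mathbb Z^d$, $|\mathbf j|=|\mathbf m|+1$; admissible means at most one $m_i$ odd; $X^{(\frac1d\mathbf 1-\delta_i)}\equiv\frac1d$; $X^{(\mathbf m+\frac1d\mathbf 1)}\equiv0$ if some $m_i<0$ and $\mathbf m\notin\{-\delta_1,\dots,-\delta_d\}$; for admissible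 $\mathbf j$ with $\mathbf m\ge0$: if $|\mathbf j|$ is even (exactly one $m_i$ odd), $X^{(\mathbf j)}=|\mathbf j|\int u_0R_i[u_0X^{(\mathbf j-\delta_i)}]$ for that $i$; if $|\mathbf j|$ is odd, $X^{(\mathbf j)}=|\mathbf j|\int\frac{1}{pu_0^2}\sum_{i=1}^dX^{(\mathbf j-\delta_i)}$. *)

theory Defs
  imports "HOL-Analysis.Analysis"
begin

text \<open>Conventions: multi-indices in Z^d / N^d are functions on nat, only the entries
  with index below d are meaningful. The interval is I = {x1..x2}; derivatives are taken
  within I.\<close>

definition cint :: "real \<Rightarrow> (real \<Rightarrow> complex) \<Rightarrow> real \<Rightarrow> complex" where
  "cint x0 f x = (if x0 \<le> x then integral {x0..x} f else - integral {x..x0} f)"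

definition Rop :: "(nat \<Rightarrow> real \<Rightarrow> complex) \<Rightarrow> (nat \<Rightarrow> real \<Rightarrow> complex) \<Rightarrow> real set
    \<Rightarrow> nat \<Rightarrow> (real \<Rightarrow> complex) \<Rightarrow> real \<Rightarrow> complex" where
  "Rop r s I i y t = r i t * y t + s i t * vector_derivative y (at t within I)"

definition dminus :: "(nat \<Rightarrow> int) \<Rightarrow> nat \<Rightarrow> (nat \<Rightarrow> int)" where
  "dminus j i = j(i := j i - 1)"

text \<open>Level-indexed auxiliary: XtL ... k j is the value of the formal power tilde X^(j)
  assuming |j| = k.\<close>
primrec XtL :: "nat \<Rightarrow> (real \<Rightarrow> complex) \<Rightarrow> (real \<Rightarrow> complex) \<Rightarrow> (nat \<Rightarrow> real \<Rightarrow> complex)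
    \<Rightarrow> (nat \<Rightarrow> real \<Rightarrow> complex) \<Rightarrow> real \<Rightarrow> real set \<Rightarrow> nat \<Rightarrow> (nat \<Rightarrow> int) \<Rightarrow> real \<Rightarrow> complex" where
  "XtL d p u0 r s x0 I 0 j = (\<lambda>x. if (\<forall>i<d. j i = 0) then 1 else 0)"
| "XtL d p u0 r s x0 I (Suc k) j = (\<lambda>x.
     if (\<exists>i<d. j i < 0) then 0
     else if odd (Suc k) then
       (let i = (THE i. i < d \<and> odd (j i)) in
        of_nat (Suc k) * cint x0 (\<lambda>t. u0 t * Rop r s I i
            (\<lambda>t'. u0 t' * XtL d p u0 r s x0 I k (dminus j i) t') t) x)
     else of_nat (Suc k) * cint x0
            (\<lambda>t. (\<Sum>i<d. XtL d p u0 r s x0 I k (dminus j i) t) / (p t * u0 t ^ 2)) x)"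

definition Xtilde :: "nat \<Rightarrow> (real \<Rightarrow> complex) \<Rightarrow> (real \<Rightarrow> complex) \<Rightarrow> (nat \<Rightarrow> real \<Rightarrow> complex)
    \<Rightarrow> (nat \<Rightarrow> real \<Rightarrow> complex) \<Rightarrow> real \<Rightarrow> real set \<Rightarrow> (nat \<Rightarrow> int) \<Rightarrow> real \<Rightarrow> complex" where
  "Xtilde d p u0 r s x0 I j =
     (if (\<Sum>i<d. j i) < 0 then (\<lambda>_. 0) else XtL d p u0 r s x0 I (nat (\<Sum>i<d. j i)) j)"

text \<open>Level-indexed auxiliary for X^(m + 1/d 1): XL ... k m assumes |m| + 1 = k.\<close>
primrec XL :: "nat \<Rightarrow> (real \<Rightarrow> complex) \<Rightarrow> (real \<Rightarrow> complex) \<Rightarrow> (nat \<Rightarrow> real \<Rightarrow> complex)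
    \<Rightarrow> (nat \<Rightarrow> real \<Rightarrow> complex) \<Rightarrow> real \<Rightarrow> real set \<Rightarrow> nat \<Rightarrow> (nat \<Rightarrow> int) \<Rightarrow> real \<Rightarrow> complex" where
  "XL d p u0 r s x0 I 0 m = (\<lambda>x.
     if (\<exists>i<d. \<forall>l<d. m l = (if l = i then -1 else 0)) then 1 / of_nat d else 0)"
| "XL d p u0 r s x0 I (Suc k) m = (\<lambda>x.
     if (\<exists>i<d. m i < 0) then 0
     else if even (Suc k) then
       (let i = (THE i. i < d \<and> odd (m i)) in
        of_nat (Suc k) * cint x0 (\<lambda>t. u0 t * Rop r s I i
            (\<lambda>t'. u0 t' * XL d p u0 r s x0 I k (dminus m i) t') t) x)
     else of_nat (Suc k) * cint x0
            (\<lambda>t. (\<Sum>i<d. XL d p u0 r s x0 I k (dminus m i) t) / (p t * u0 t ^ 2)) x)"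

text \<open>Xgen ... m stands for X^(m + (1/d) 1).\<close>
definition Xgen :: "nat \<Rightarrow> (real \<Rightarrow> complex) \<Rightarrow> (real \<Rightarrow> complex) \<Rightarrow> (nat \<Rightarrow> real \<Rightarrow> complex)
    \<Rightarrow> (nat \<Rightarrow> real \<Rightarrow> complex) \<Rightarrow> real \<Rightarrow> real set \<Rightarrow> (nat \<Rightarrow> int) \<Rightarrow> real \<Rightarrow> complex" where
  "Xgen d p u0 r s x0 I m =
     (if (\<Sum>i<d. m i) + 1 < 0 then (\<lambda>_. 0) else XL d p u0 r s x0 I (nat ((\<Sum>i<d. m i) + 1)) m)"

text \<open>Multi-indices n in N^d with |n| <= N (partial sums ordered by total degree).\<close>
definition midx :: "nat \<Rightarrow> nat \<Rightarrow> (nat \<Rightarrow> nat) set" where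
  "midx d N = {n. (\<forall>i. d \<le> i \<longrightarrow> n i = 0) \<and> (\<Sum>i<d. n i) \<le> N}"

definition msize :: "nat \<Rightarrow> (nat \<Rightarrow> nat) \<Rightarrow> nat" where
  "msize d n = (\<Sum>i<d. n i)"

definition lampow :: "nat \<Rightarrow> (nat \<Rightarrow> complex) \<Rightarrow> (nat \<Rightarrow> nat) \<Rightarrow> complex" where
  "lampow d lam n = (\<Prod>i<d. lam i ^ n i)"

definition solves :: "nat \<Rightarrow> real set \<Rightarrow> (real \<Rightarrow> complex) \<Rightarrow> (real \<Rightarrow> complex)
    \<Rightarrow> (nat \<Rightarrow> real \<Rightarrow> complex) \<Rightarrow> (nat \<Rightarrow> real \<Rightarrow> complex) \<Rightarrow> (nat \<Rightarrow> complex)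
    \<Rightarrow> (real \<Rightarrow> complex) \<Rightarrow> bool" where
  "solves d I p q r s lam y \<longleftrightarrow>
     (\<exists>y1 y2. \<forall>x\<in>I. (y has_vector_derivative y1 x) (at x within I)
        \<and> ((\<lambda>t. p t * y1 t) has_vector_derivative y2 x) (at x within I)
        \<and> y2 x + q x * y x = (\<Sum>i<d. lam i * (r i x * y x + s i x * y1 x)))"

end

theory Submission
  imports Defs
begin

lemma cint_x0[simp]: "cint x0 g x0 = 0"
  by (simp add: cint_def)

lemma cint_eq:
  fixes g :: "real \<Rightarrow> complex"
  assumes "a \<le> x0" "x0 \<le> b" "g integrable_on {a..b}" "x \<in> {a..b}"
  shows "cint x0 g x = integral {a..x} g - integral {a..x0} g"
proof (cases "x0 \<le> x")
  case True
  have "g integrable_on {a..x}" using assms by (auto intro: integrable_on_subinterval)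
  then have "integral {a..x0} g + integral {x0..x} g = integral {a..x} g"
    using True assms by (intro Henstock_Kurzweil_Integration.integral_combine) auto
  then show ?thesis using True by (simp add: cint_def algebra_simps)
next
  case False
  have "g integrable_on {a..x0}" using assms by (auto intro: integrable_on_subinterval)
  then have "integral {a..x} g + integral {x..x0} g = integral {a..x0} g"
    using False assms by (intro Henstock_Kurzweil_Integration.integral_combine) auto
  then show ?thesis using False by (simp add: cint_def algebra_simps)
qed

lemma cint_vd:
  fixes g :: "real \<Rightarrow> complex"
  assumes "continuous_on {a..b} g" "x0 \<in> {a..b}" "x \<in> {a..b}"
  shows "(cint x0 g has_vector_derivative g x) (at x within {a..b})"
proof -
  have int: "g integrable_on {a..b}" using assms integrable_continuous_real by blast
  have "((\<lambda>y. integral {a..y} g - integral {a..x0} g) has_vector_derivative g x - 0) (at x within {a..b})"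
    by (intro has_vector_derivative_diff integral_has_vector_derivative assms) auto
  then have D: "((\<lambda>y. integral {a..y} g - integral {a..x0} g) has_vector_derivative g x) (at x within {a..b})"
    by simp
  show ?thesis
    by (rule has_vector_derivative_transform[OF assms(3) _ D]) (use assms int cint_eq in auto)
qed

lemma pow_deriv1:
  "((\<lambda>t::real. c * (t - x0) ^ Suc m / Suc m) has_vector_derivative c * (t - x0) ^ m) (at t within S)"
proof -
  have "((\<lambda>t::real. c * (t - x0) ^ Suc m / Suc m) has_real_derivative
     c * (of_nat (Suc m) * (1 * (t - x0) ^ (Suc m - Suc 0))) / Suc m) (at t within S)"
    by (intro DERIV_cdivide DERIV_cmult DERIV_power) (auto intro!: derivative_eq_intros)
  then show ?thesis by (simp add: has_real_derivative_iff_has_vector_derivative)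
qed

lemma pow_deriv2:
  "((\<lambda>t::real. - c * (x0 - t) ^ Suc m / Suc m) has_vector_derivative c * (x0 - t) ^ m) (at t within S)"
proof -
  have "((\<lambda>t::real. - c * (x0 - t) ^ Suc m / Suc m) has_real_derivative
     - c * (of_nat (Suc m) * ((0 - 1) * (x0 - t) ^ (Suc m - Suc 0))) / Suc m) (at t within S)"
    by (intro DERIV_cdivide DERIV_cmult DERIV_power) (auto intro!: derivative_eq_intros)
  then show ?thesis by (simp add: has_real_derivative_iff_has_vector_derivative)
qed

lemma deriv_bound:
  fixes f g :: "real \<Rightarrow> complex"
  assumes ab: "x0 \<in> {a..b}" "x \<in> {a..b}"
    and der: "\<And>t. t \<in> {a..b} \<Longrightarrow> (f has_vector_derivative g t) (at t within {a..b})"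
    and f0: "f x0 = 0"
    and bnd: "\<And>t. t \<in> {a..b} \<Longrightarrow> norm (g t) \<le> c * \<bar>t - x0\<bar> ^ m"
  shows "norm (f x) \<le> c * \<bar>x - x0\<bar> ^ Suc m / Suc m"
proof (cases "x0 \<le> x")
  case True
  have sub: "{x0..x} \<subseteq> {a..b}" using ab by auto
  have "\<And>t. t \<in> {x0..x} \<Longrightarrow> (f has_vector_derivative g t) (at t within {x0..x})"
    using der sub has_vector_derivative_within_subset by blast
  then have "(g has_integral (f x - f x0)) {x0..x}"
    using True by (intro fundamental_theorem_of_calculus) auto
  then have gi: "(g has_integral f x) {x0..x}" using f0 by simp
  have "((\<lambda>t. c * (t - x0) ^ m) has_integral
      (c * (x - x0) ^ Suc m / Suc m - c * (x0 - x0) ^ Suc m / Suc m)) {x0..x}"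
    apply (rule fundamental_theorem_of_calculus) using True apply simp by (rule pow_deriv1)
  then have pi: "((\<lambda>t. c * (t - x0) ^ m) has_integral (c * (x - x0) ^ Suc m / Suc m)) {x0..x}"
    by simp
  have "norm (integral {x0..x} g) \<le> integral {x0..x} (\<lambda>t. c * (t - x0) ^ m)"
    apply (rule integral_norm_bound_integral)
    using gi pi apply (auto simp: has_integral_integrable)[2]
    using bnd sub by fastforce
  moreover have "integral {x0..x} (\<lambda>t. c * (t - x0) ^ m) = c * (x - x0) ^ Suc m / Suc m"
    using pi by (rule integral_unique)
  moreover have "integral {x0..x} g = f x" using gi by (rule integral_unique)
  ultimately show ?thesis using True by simp
next
  case False
  have sub: "{x..x0} \<subseteq> {a..b}" using ab by auto
  have "\<And>t. t \<in> {x..x0} \<Longrightarrow> (f has_vector_derivative g t) (at t within {x..x0})"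
    using der sub has_vector_derivative_within_subset by blast
  then have "(g has_integral (f x0 - f x)) {x..x0}"
    using False by (intro fundamental_theorem_of_calculus) auto
  then have gi: "(g has_integral - f x) {x..x0}" using f0 by simp
  have "((\<lambda>t. c * (x0 - t) ^ m) has_integral
      (- c * (x0 - x0) ^ Suc m / Suc m - (- c * (x0 - x) ^ Suc m / Suc m))) {x..x0}"
    apply (rule fundamental_theorem_of_calculus) using False apply simp by (rule pow_deriv2)
  then have pi: "((\<lambda>t. c * (x0 - t) ^ m) has_integral (c * (x0 - x) ^ Suc m / Suc m)) {x..x0}"
    by simp
  have "norm (integral {x..x0} g) \<le> integral {x..x0} (\<lambda>t. c * (x0 - t) ^ m)"
    apply (rule integral_norm_bound_integral)
    using gi pi apply (auto simp: has_integral_integrable)[2]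
    using bnd sub by (fastforce simp: abs_minus_commute)
  moreover have "integral {x..x0} (\<lambda>t. c * (x0 - t) ^ m) = c * (x0 - x) ^ Suc m / Suc m"
    using pi by (rule integral_unique)
  moreover have "integral {x..x0} g = - f x" using gi by (rule integral_unique)
  ultimately show ?thesis using False by (simp add: abs_minus_commute)
qed

lemma termwise_vd:
  fixes f f' :: "nat \<Rightarrow> real \<Rightarrow> complex"
  assumes der: "\<And>n x. x \<in> {a..b} \<Longrightarrow> (f n has_vector_derivative f' n x) (at x within {a..b})"
    and ul: "uniform_limit {a..b} (\<lambda>N x. \<Sum>n<N. f' n x) G sequentially"
    and lim: "\<And>x. x \<in> {a..b} \<Longrightarrow> (\<lambda>N. \<Sum>n<N. f n x) \<longlonglongrightarrow> F x"
    and x: "x \<in> {a..b}"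
  shows "(F has_vector_derivative G x) (at x within {a..b})"
proof -
  have "\<exists>g. \<forall>x\<in>{a..b}. (\<lambda>N. \<Sum>n<N. f n x) \<longlonglongrightarrow> g x \<and>
      (g has_derivative (\<lambda>h. h *\<^sub>R G x)) (at x within {a..b})"
  proof (rule has_derivative_sequence[where f'="\<lambda>N x h. h *\<^sub>R (\<Sum>n<N. f' n x)"])
    show "convex {a..b}" by simp
    show "x \<in> {a..b}" by (rule x)
    show "(\<lambda>N. \<Sum>n<N. f n x) \<longlonglongrightarrow> F x" by (rule lim[OF x])
    fix N y assume "y \<in> {a..b}"
    then have "((\<lambda>x. \<Sum>n<N. f n x) has_vector_derivative (\<Sum>n<N. f' n y)) (at y within {a..b})"
      by (intro has_vector_derivative_sum der)
    then show "((\<lambda>x. \<Sum>n<N. f n x) has_derivative (\<lambda>h. h *\<^sub>R (\<Sum>n<N. f' n y))) (at y within {a..b})"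
      by (simp add: has_vector_derivative_def)
  next
    fix e :: real assume "e > 0"
    then have "\<forall>\<^sub>F N in sequentially. \<forall>x\<in>{a..b}. dist (\<Sum>n<N. f' n x) (G x) < e"
      using ul by (simp add: uniform_limit_iff)
    then show "\<forall>\<^sub>F N in sequentially. \<forall>x\<in>{a..b}. \<forall>h. norm (h *\<^sub>R (\<Sum>n<N. f' n x) - h *\<^sub>R G x) \<le> e * norm h"
    proof (rule eventually_mono)
      fix N assume H: "\<forall>x\<in>{a..b}. dist (\<Sum>n<N. f' n x) (G x) < e"
      show "\<forall>x\<in>{a..b}. \<forall>h. norm (h *\<^sub>R (\<Sum>n<N. f' n x) - h *\<^sub>R G x) \<le> e * norm h"
      proof (intro ballI allI)
        fix y h assume "y \<in> {a..b}"
        have "norm (h *\<^sub>R (\<Sum>n<N. f' n y) - h *\<^sub>R G y) = \<bar>h\<bar> * dist (\<Sum>n<N. f' n y) (G y)"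
          by (simp add: dist_norm scaleR_diff_right[symmetric])
        also have "\<dots> \<le> \<bar>h\<bar> * e" using H \<open>y \<in> {a..b}\<close> by (intro mult_left_mono) (auto intro: less_imp_le)
        finally show "norm (h *\<^sub>R (\<Sum>n<N. f' n y) - h *\<^sub>R G y) \<le> e * norm h" by (simp add: mult.commute)
      qed
    qed
  qed
  then obtain g where g: "\<And>x. x\<in>{a..b} \<Longrightarrow> (\<lambda>N. \<Sum>n<N. f n x) \<longlonglongrightarrow> g x \<and>
      (g has_derivative (\<lambda>h. h *\<^sub>R G x)) (at x within {a..b})" by blast
  have eq: "\<And>y. y \<in> {a..b} \<Longrightarrow> g y = F y"
    using g lim LIMSEQ_unique by blast
  have "(g has_vector_derivative G x) (at x within {a..b})"
    using g[OF x] by (simp add: has_vector_derivative_def)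
  then show ?thesis
    by (rule has_vector_derivative_transform[OF x, rotated]) (use eq in auto)
qed

lemma uniform_limit_cmul_bounded:
  fixes c :: "real \<Rightarrow> complex"
  assumes ul: "uniform_limit S f F sequentially" and B: "\<And>x. x\<in>S \<Longrightarrow> norm (c x) \<le> B"
  shows "uniform_limit S (\<lambda>N x. c x * f N x) (\<lambda>x. c x * F x) sequentially"
  unfolding uniform_limit_iff
proof (intro allI impI)
  fix e :: real assume e: "e > 0"
  then have "e / (\<bar>B\<bar> + 1) > 0" by simp
  then have "\<forall>\<^sub>F N in sequentially. \<forall>x\<in>S. dist (f N x) (F x) < e / (\<bar>B\<bar> + 1)"
    using ul by (simp add: uniform_limit_iff)
  then show "\<forall>\<^sub>F N in sequentially. \<forall>x\<in>S. dist (c x * f N x) (c x * F x) < e"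
  proof (rule eventually_mono)
    fix N assume H: "\<forall>x\<in>S. dist (f N x) (F x) < e / (\<bar>B\<bar> + 1)"
    show "\<forall>x\<in>S. dist (c x * f N x) (c x * F x) < e"
    proof
      fix x assume x: "x \<in> S"
      have "dist (c x * f N x) (c x * F x) = norm (c x) * dist (f N x) (F x)"
        by (simp add: dist_norm norm_mult[symmetric] right_diff_distrib)
      also have "\<dots> \<le> (\<bar>B\<bar> + 1) * dist (f N x) (F x)"
        using B[OF x] by (intro mult_right_mono) auto
      also have "\<dots> < (\<bar>B\<bar> + 1) * (e / (\<bar>B\<bar> + 1))"
        using H x by (intro mult_strict_left_mono) auto
      also have "\<dots> = e" by simp
      finally show "dist (c x * f N x) (c x * F x) < e" .
    qed
  qed
qed



primrec GL :: "(nat \<Rightarrow> bool) \<Rightarrow> ((nat \<Rightarrow> int) \<Rightarrow> complex) \<Rightarrow> nat \<Rightarrow> (real \<Rightarrow> complex) \<Rightarrow> (real \<Rightarrow> complex) \<Rightarrow> (nat \<Rightarrow> real \<Rightarrow> complex)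
    \<Rightarrow> (nat \<Rightarrow> real \<Rightarrow> complex) \<Rightarrow> real \<Rightarrow> real set \<Rightarrow> nat \<Rightarrow> (nat \<Rightarrow> int) \<Rightarrow> real \<Rightarrow> complex" where
  "GL e b d p u0 r s x0 I 0 j = (\<lambda>x. b j)"
| "GL e b d p u0 r s x0 I (Suc k) j = (\<lambda>x.
     if (\<exists>i<d. j i < 0) then 0
     else if e (Suc k) then
       (let i = (THE i. i < d \<and> odd (j i)) in
        of_nat (Suc k) * cint x0 (\<lambda>t. u0 t * Rop r s I i
            (\<lambda>t'. u0 t' * GL e b d p u0 r s x0 I k (dminus j i) t') t) x)
     else of_nat (Suc k) * cint x0
            (\<lambda>t. (\<Sum>i<d. GL e b d p u0 r s x0 I k (dminus j i) t) / (p t * u0 t ^ 2)) x)"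

lemma XtL_GL: "XtL d p u0 r s x0 I k = GL odd (\<lambda>j. if (\<forall>i<d. j i = 0) then 1 else 0) d p u0 r s x0 I k"
  by (induction k) (auto simp: fun_eq_iff)

lemma XL_GL: "XL d p u0 r s x0 I k = GL even
   (\<lambda>m. if (\<exists>i<d. \<forall>l<d. m l = (if l = i then -1 else 0)) then 1 / of_nat d else 0) d p u0 r s x0 I k"
  by (induction k) (auto simp: fun_eq_iff)

definition adm :: "nat \<Rightarrow> (nat \<Rightarrow> int) \<Rightarrow> bool" where
  "adm d j \<longleftrightarrow> (\<forall>a<d. \<forall>b<d. odd (j a) \<longrightarrow> odd (j b) \<longrightarrow> a = b)"

lemma sum_dminus: "i < d \<Longrightarrow> (\<Sum>l<d. dminus j i l) = (\<Sum>l<d. j l) - 1"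
proof -
  assume i: "i < d"
  have "(\<Sum>l<d. dminus j i l) = (\<Sum>l<d. j l - (if l = i then 1 else 0))"
    by (intro sum.cong) (auto simp: dminus_def)
  also have "\<dots> = (\<Sum>l<d. j l) - 1" using i by (simp add: sum_subtractf)
  finally show ?thesis .
qed

lemma odd_sum_ex: fixes d :: nat shows "odd (\<Sum>l<d. (j l::int)) \<Longrightarrow> \<exists>a<d. odd (j a)"
proof (rule ccontr)
  assume "odd (\<Sum>l<d. j l)" "\<not> (\<exists>a<d. odd (j a))"
  then have C: "{a\<in>{..<d}. odd (j a)} = {}" by auto
  have "even (sum j {..<d})" by (simp only: even_sum_iff[OF finite_lessThan] C) simp
  then show False using \<open>odd _\<close> by simp
qed

lemma adm_even_all: fixes d :: nat shows "adm d j \<Longrightarrow> even (\<Sum>l<d. (j l::int)) \<Longrightarrow> a < d \<Longrightarrow> even (j a)"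
proof (rule ccontr)
  assume A: "adm d j" "even (\<Sum>l<d. j l)" "a < d" "\<not> even (j a)"
  then have C: "{l\<in>{..<d}. odd (j l)} = {a}" by (auto simp: adm_def)
  have "odd (sum j {..<d})" by (simp only: even_sum_iff[OF finite_lessThan] C) simp
  then show False using A by simp
qed

locale sett =
  fixes d :: nat and x0 x1 x2 :: real and p q u0 du w :: "real \<Rightarrow> complex"
    and r s :: "nat \<Rightarrow> real \<Rightarrow> complex" and lam :: "nat \<Rightarrow> complex"
  assumes d1: "d \<ge> 1" and x12: "x1 < x2" and x0I: "x0 \<in> {x1..x2}"
    and pc: "continuous_on {x1..x2} p" and qc: "continuous_on {x1..x2} q"
    and rc: "\<And>i. i < d \<Longrightarrow> continuous_on {x1..x2} (r i)"
    and sc: "\<And>i. i < d \<Longrightarrow> continuous_on {x1..x2} (s i)"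
    and pnz: "\<And>x. x \<in> {x1..x2} \<Longrightarrow> p x \<noteq> 0"
    and unz: "\<And>x. x \<in> {x1..x2} \<Longrightarrow> u0 x \<noteq> 0"
    and u0d: "\<And>x. x \<in> {x1..x2} \<Longrightarrow> (u0 has_vector_derivative du x) (at x within {x1..x2})"
    and pdud: "\<And>x. x \<in> {x1..x2} \<Longrightarrow> ((\<lambda>t. p t * du t) has_vector_derivative w x) (at x within {x1..x2})"
    and weq: "\<And>x. x \<in> {x1..x2} \<Longrightarrow> w x + q x * u0 x = 0"
begin

abbreviation "I \<equiv> {x1..x2}"

abbreviation G where "G e b k j \<equiv> GL e b d p u0 r s x0 I k j"

lemma u0c: "continuous_on I u0"
  using u0d by (rule continuous_on_vector_derivative)

lemma duc: "continuous_on I du"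
proof -
  have "continuous_on I (\<lambda>t. p t * du t)" using pdud by (rule continuous_on_vector_derivative)
  then have "continuous_on I (\<lambda>t. (p t * du t) / p t)"
    using pc pnz by (intro continuous_on_divide) auto
  then show ?thesis by (rule continuous_on_eq) (simp add: pnz)
qed

lemma vd_unique:
  fixes f :: "real \<Rightarrow> complex"
  assumes "x \<in> I" "(f has_vector_derivative f') (at x within I)"
  shows "vector_derivative f (at x within I) = f'"
  using x12 assms by (rule vector_derivative_within_closed_interval)

fun DG where
  "DG e b 0 j = (\<lambda>x. 0)"
| "DG e b (Suc k) j = (\<lambda>x.
     if (\<exists>i<d. j i < 0) then 0
     else if e (Suc k) then
       (let i = (THE i. i < d \<and> odd (j i)) in
        of_nat (Suc k) * (u0 x * Rop r s I i (\<lambda>t'. u0 t' * G e b k (dminus j i) t') x))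
     else of_nat (Suc k) * ((\<Sum>i<d. G e b k (dminus j i) x) / (p x * u0 x ^ 2)))"

lemma G_props:
  assumes alt: "\<And>k. e (Suc k) = (\<not> e k)"
  shows "adm d j \<Longrightarrow> (e k \<longleftrightarrow> odd (\<Sum>i<d. j i)) \<Longrightarrow>
    continuous_on I (G e b k j) \<and> continuous_on I (DG e b k j) \<and>
    (\<forall>x\<in>I. (G e b k j has_vector_derivative DG e b k j x) (at x within I))"
proof (induction k arbitrary: j)
  case 0
  then show ?case by (auto intro: continuous_on_const)
next
  case (Suc k)
  show ?case
  proof (cases "\<exists>i<d. j i < 0")
    case True
    then show ?thesis by (simp add: continuous_on_const)
  next
    case neg: False
    show ?thesis
    proof (cases "e (Suc k)")
      case True
      then have "odd (\<Sum>i<d. j i)" using Suc.prems by simp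
      then obtain i0 where i0: "i0 < d" "odd (j i0)" using odd_sum_ex by blast
      have the: "(THE i. i < d \<and> odd (j i)) = i0"
        using i0 Suc.prems(1) by (intro the_equality) (auto simp: adm_def)
      define j' where "j' = dminus j i0"
      have adm': "adm d j'"
        using i0 Suc.prems(1) by (auto simp: adm_def j'_def dminus_def)
      have "(e k \<longleftrightarrow> odd (\<Sum>i<d. j' i))"
        using True alt[of k] i0 \<open>odd (\<Sum>i<d. j i)\<close> by (simp add: j'_def sum_dminus)
      with Suc.IH[OF adm'] have IH: "continuous_on I (G e b k j')" "continuous_on I (DG e b k j')"
        "\<And>x. x \<in> I \<Longrightarrow> (G e b k j' has_vector_derivative DG e b k j' x) (at x within I)" by auto
      define Y where "Y = (\<lambda>t'. u0 t' * G e b k j' t')"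
      have Yd: "x \<in> I \<Longrightarrow> (Y has_vector_derivative (u0 x * DG e b k j' x + du x * G e b k j' x)) (at x within I)" for x
        unfolding Y_def by (intro has_vector_derivative_mult u0d IH)
      define h where "h = (\<lambda>t. u0 t * Rop r s I i0 Y t)"
      define h' where "h' = (\<lambda>t. u0 t * (r i0 t * (u0 t * G e b k j' t) + s i0 t * (u0 t * DG e b k j' t + du t * G e b k j' t)))"
      have hh': "t \<in> I \<Longrightarrow> h t = h' t" for t
        using vd_unique[OF _ Yd] by (simp add: h_def h'_def Rop_def Y_def)
      have "continuous_on I h'"
        unfolding h'_def using IH(1,2) u0c duc rc[OF i0(1)] sc[OF i0(1)]
        by (intro continuous_intros) auto
      then have hc: "continuous_on I h" by (rule continuous_on_eq) (use hh' in auto)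
      have Geq: "G e b (Suc k) j = (\<lambda>x. of_nat (Suc k) * cint x0 h x)"
        by (rule ext, simp only: GL.simps if_not_P[OF neg] if_P[OF True] Let_def the) (simp add: j'_def Y_def h_def)
      have DGeq: "DG e b (Suc k) j = (\<lambda>x. of_nat (Suc k) * h x)"
        by (rule ext, simp only: DG.simps if_not_P[OF neg] if_P[OF True] Let_def the) (simp add: j'_def Y_def h_def)
      show ?thesis unfolding Geq DGeq
        using hc x0I
        by (auto intro!: continuous_intros has_vector_derivative_mult_right cint_vd
                 intro: continuous_on_vector_derivative[OF cint_vd])
    next
      case False
      then have ev: "even (\<Sum>i<d. j i)" using Suc.prems by simp
      have IH: "continuous_on I (G e b k (dminus j i)) \<and> continuous_on I (DG e b k (dminus j i)) \<and>
          (\<forall>x\<in>I. (G e b k (dminus j i) has_vector_derivative DG e b k (dminus j i) x) (at x within I))"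
        if i: "i < d" for i
      proof (rule Suc.IH)
        show "adm d (dminus j i)"
          using adm_even_all[OF Suc.prems(1) ev] i by (auto simp: adm_def dminus_def)
        show "e k = odd (\<Sum>l<d. dminus j i l)"
          using False alt[of k] ev i by (simp add: sum_dminus)
      qed
      define h where "h = (\<lambda>t. (\<Sum>i<d. G e b k (dminus j i) t) / (p t * u0 t ^ 2))"
      have hc: "continuous_on I h"
        unfolding h_def using IH pc u0c pnz unz
        by (intro continuous_intros) auto
      have Geq: "G e b (Suc k) j = (\<lambda>x. of_nat (Suc k) * cint x0 h x)"
        by (rule ext, simp only: GL.simps if_not_P[OF neg] if_not_P[OF False]) (simp add: h_def)
      have DGeq: "DG e b (Suc k) j = (\<lambda>x. of_nat (Suc k) * h x)"
        by (rule ext, simp only: DG.simps if_not_P[OF neg] if_not_P[OF False]) (simp add: h_def)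
      show ?thesis unfolding Geq DGeq
        using hc x0I
        by (auto intro!: continuous_intros has_vector_derivative_mult_right cint_vd
                 intro: continuous_on_vector_derivative[OF cint_vd])
    qed
  qed
qed

end


definition lev :: "nat \<Rightarrow> nat \<Rightarrow> (nat \<Rightarrow> nat) set" where
  "lev d k = {n. (\<forall>i. d \<le> i \<longrightarrow> n i = 0) \<and> msize d n = k}"

definition iota :: "(nat \<Rightarrow> nat) \<Rightarrow> nat \<Rightarrow> int" where
  "iota n = (\<lambda>i. 2 * int (n i))"

definition iotad :: "(nat \<Rightarrow> nat) \<Rightarrow> nat \<Rightarrow> nat \<Rightarrow> int" where
  "iotad n i = (\<lambda>l. 2 * int (n l) - (if l = i then 1 else 0))"

lemma finite_lev: "finite (lev d k)"
proof -
  have "lev d k \<subseteq> (\<lambda>f i. if i < d then f i else 0) ` (PiE {..<d} (\<lambda>_. {..k}))"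
  proof
    fix n assume n: "n \<in> lev d k"
    have le: "n i \<le> k" if "i < d" for i
    proof -
      have "n i \<le> (\<Sum>l<d. n l)" using that by (intro member_le_sum) auto
      then show ?thesis using n by (simp add: lev_def msize_def)
    qed
    have "n = (\<lambda>i. if i < d then restrict n {..<d} i else 0)"
      using n by (auto simp: lev_def fun_eq_iff)
    moreover have "restrict n {..<d} \<in> PiE {..<d} (\<lambda>_. {..k})" using le by auto
    ultimately show "n \<in> (\<lambda>f i. if i < d then f i else 0) ` (PiE {..<d} (\<lambda>_. {..k}))" by blast
  qed
  moreover have "finite ((\<lambda>f i. if i < d then f i else 0) ` (PiE {..<d} (\<lambda>_. {..k})))"
    by (intro finite_imageI finite_PiE) auto
  ultimately show ?thesis by (rule finite_subset)
qed

lemma midx_lev: "midx d N = (\<Union>k\<in>{..N}. lev d k)"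
  by (auto simp: midx_def lev_def msize_def)

lemma sum_midx: "(\<Sum>n\<in>midx d N. f n) = (\<Sum>k\<le>N. \<Sum>n\<in>lev d k. f n)"
  unfolding midx_lev
  by (rule sum.UNION_disjoint) (auto simp: lev_def intro: finite_lev[unfolded lev_def])

lemma msize_upd: "i < d \<Longrightarrow> msize d (m(i := Suc (m i))) = Suc (msize d m)"
proof -
  assume i: "i < d"
  have "(\<Sum>l<d. (m(i := Suc (m i))) l) = (\<Sum>l<d. m l + (if l = i then 1 else 0))"
    by (intro sum.cong) auto
  also have "\<dots> = Suc (\<Sum>l<d. m l)" using i by (simp add: sum.distrib)
  finally show ?thesis by (simp add: msize_def)
qed

lemma msize_dec: "i < d \<Longrightarrow> n i \<noteq> 0 \<Longrightarrow> Suc (msize d (n(i := n i - 1))) = msize d n"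
proof -
  assume i: "i < d" "n i \<noteq> 0"
  have "n = (n(i := n i - 1))(i := Suc ((n(i := n i - 1)) i))" using i by auto
  then have "msize d n = msize d ((n(i := n i - 1))(i := Suc ((n(i := n i - 1)) i)))" by simp
  also have "\<dots> = Suc (msize d (n(i := n i - 1)))" using i by (intro msize_upd)
  finally show ?thesis by simp
qed

lemma lampow_upd: "i < d \<Longrightarrow> lampow d lam (m(i := Suc (m i))) = lam i * lampow d lam m"
proof -
  assume i: "i < d"
  have "(\<Prod>l<d. lam l ^ (m(i := Suc (m i))) l) = (\<Prod>l<d. lam l ^ m l * (if l = i then lam l else 1))"
    by (intro prod.cong) auto
  also have "\<dots> = (\<Prod>l<d. lam l ^ m l) * lam i" using i by (simp add: prod.distrib)
  finally show ?thesis by (simp add: lampow_def mult.commute)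
qed

lemma lev_reindex:
  assumes i: "i < d"
  shows "(\<Sum>n\<in>lev d (Suc k). if n i = 0 then 0 else F n) = (\<Sum>m\<in>lev d k. F (m(i := Suc (m i))))"
proof -
  have "(\<Sum>n\<in>lev d (Suc k). if n i = 0 then 0 else F n) = (\<Sum>n\<in>{n\<in>lev d (Suc k). n i \<noteq> 0}. F n)"
  proof -
    have "(\<Sum>n\<in>lev d (Suc k). if n i = 0 then 0 else F n) = (\<Sum>n\<in>lev d (Suc k) \<inter> - {n. n i = 0}. F n)"
      by (simp add: sum.If_cases finite_lev)
    also have "lev d (Suc k) \<inter> - {n. n i = 0} = {n\<in>lev d (Suc k). n i \<noteq> 0}" by auto
    finally show ?thesis .
  qed
  also have "\<dots> = (\<Sum>m\<in>lev d k. F (m(i := Suc (m i))))"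
  proof (rule sum.reindex_bij_witness[where j="\<lambda>n. n(i := n i - 1)" and i="\<lambda>m. m(i := Suc (m i))"])
    fix m assume m: "m \<in> lev d k"
    show "(m(i := Suc (m i)))(i := (m(i := Suc (m i))) i - 1) = m" by auto
    show "m(i := Suc (m i)) \<in> {n \<in> lev d (Suc k). n i \<noteq> 0}"
      using m i by (auto simp: lev_def msize_upd)
  next
    fix n assume n: "n \<in> {n \<in> lev d (Suc k). n i \<noteq> 0}"
    have e: "(n(i := n i - 1))(i := Suc ((n(i := n i - 1)) i)) = n" using n by auto
    then show "(n(i := n i - 1))(i := Suc ((n(i := n i - 1)) i)) = n" .
    show "n(i := n i - 1) \<in> lev d k"
      using n i msize_dec[of i d n] by (auto simp: lev_def)
    show "F ((n(i := n i - 1))(i := Suc ((n(i := n i - 1)) i))) = F n" using e by simp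
  qed
  finally show ?thesis .
qed

lemma dminus_iota: "dminus (iota n) i = iotad n i"
  by (auto simp: dminus_def iota_def iotad_def fun_eq_iff)

lemma dminus_iotad: "dminus (iotad (m(i := Suc (m i))) i) i = iota m"
  by (auto simp: dminus_def iota_def iotad_def fun_eq_iff)

lemma sum_iota: "(\<Sum>l<d. iota n l) = 2 * int (msize d n)"
  by (simp add: iota_def msize_def sum_distrib_left)

lemma sum_iotad: "i < d \<Longrightarrow> (\<Sum>l<d. iotad n i l) = 2 * int (msize d n) - 1"
  using sum_dminus[of i d "iota n"] by (simp add: dminus_iota[symmetric] sum_iota)

lemma adm_iota: "adm d (iota n)"
  by (auto simp: adm_def iota_def)

lemma adm_iotad: "adm d (iotad n i)"
  by (auto simp: adm_def iotad_def split: if_splits)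

lemma iota_nneg: "\<not> (\<exists>l<d. iota n l < 0)"
  by (auto simp: iota_def)

lemma iotad_neg: "i < d \<Longrightarrow> (\<exists>l<d. iotad n i l < 0) \<longleftrightarrow> n i = 0"
  by (auto simp: iotad_def split: if_splits)

lemma the_iotad: "i < d \<Longrightarrow> (THE l. l < d \<and> odd (iotad n i l)) = i"
  by (rule the_equality) (auto simp: iotad_def split: if_splits)



context sett begin

definition Asum :: "(nat \<Rightarrow> (nat \<Rightarrow> int) \<Rightarrow> real \<Rightarrow> complex) \<Rightarrow> nat \<Rightarrow> nat \<Rightarrow> real \<Rightarrow> complex" where
  "Asum F L k x = (\<Sum>n\<in>lev d k. F L (iota n) x * lampow d lam n / of_nat (fact L))"

definition Bsum :: "(nat \<Rightarrow> (nat \<Rightarrow> int) \<Rightarrow> real \<Rightarrow> complex) \<Rightarrow> nat \<Rightarrow> nat \<Rightarrow> real \<Rightarrow> complex" where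
  "Bsum F L k x = (\<Sum>n\<in>lev d k. (\<Sum>i<d. F L (iotad n i) x) * lampow d lam n / of_nat (fact L))"

lemma Gi:
  assumes alt: "\<And>k. e (Suc k) = (\<not> e k)" and "\<not> e L"
  shows "continuous_on I (G e b L (iota n)) \<and> continuous_on I (DG e b L (iota n)) \<and>
    (\<forall>x\<in>I. (G e b L (iota n) has_vector_derivative DG e b L (iota n) x) (at x within I))"
  using assms by (intro G_props adm_iota) (auto simp: sum_iota)

lemma Gd:
  assumes alt: "\<And>k. e (Suc k) = (\<not> e k)" and "e L" "i < d"
  shows "continuous_on I (G e b L (iotad n i)) \<and> continuous_on I (DG e b L (iotad n i)) \<and>
    (\<forall>x\<in>I. (G e b L (iotad n i) has_vector_derivative DG e b L (iotad n i) x) (at x within I))"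
  using assms by (intro G_props adm_iotad) (auto simp: sum_iotad)

lemma Asum_vd:
  assumes alt: "\<And>k. e (Suc k) = (\<not> e k)" and "\<not> e L" and x: "x \<in> I"
  shows "(Asum (G e b) L k has_vector_derivative Asum (DG e b) L k x) (at x within I)"
proof -
  have "((\<lambda>x. \<Sum>n\<in>lev d k. G e b L (iota n) x * lampow d lam n / of_nat (fact L)) has_vector_derivative
     (\<Sum>n\<in>lev d k. DG e b L (iota n) x * lampow d lam n / of_nat (fact L))) (at x within I)"
    using Gi[OF assms(1,2)] x by (intro has_vector_derivative_sum has_vector_derivative_divide has_vector_derivative_mult_left) auto
  then show ?thesis by (simp add: Asum_def[abs_def])
qed

lemma Bsum_vd:
  assumes alt: "\<And>k. e (Suc k) = (\<not> e k)" and "e L" and x: "x \<in> I"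
  shows "(Bsum (G e b) L k has_vector_derivative Bsum (DG e b) L k x) (at x within I)"
proof -
  have "((\<lambda>x. \<Sum>n\<in>lev d k. (\<Sum>i<d. G e b L (iotad n i) x) * lampow d lam n / of_nat (fact L)) has_vector_derivative
     (\<Sum>n\<in>lev d k. (\<Sum>i<d. DG e b L (iotad n i) x) * lampow d lam n / of_nat (fact L))) (at x within I)"
    using Gd[OF assms(1,2)] x by (intro has_vector_derivative_sum has_vector_derivative_divide has_vector_derivative_mult_left) auto
  then show ?thesis by (simp add: Bsum_def[abs_def])
qed

lemma Asum_cont:
  assumes alt: "\<And>k. e (Suc k) = (\<not> e k)" and "\<not> e L"
  shows "continuous_on I (Asum (G e b) L k)"
  using Asum_vd[OF assms] by (rule continuous_on_vector_derivative)

lemma Bsum_cont: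
  assumes alt: "\<And>k. e (Suc k) = (\<not> e k)" and "e L"
  shows "continuous_on I (Bsum (G e b) L k)"
  using Bsum_vd[OF assms] by (rule continuous_on_vector_derivative)

lemma fact_cancel: "(of_nat (Suc L) * A) * B / of_nat (fact (Suc L)) = A * B / (of_nat (fact L) :: complex)"
proof -
  have f: "(of_nat (fact (Suc L)) :: complex) = of_nat (Suc L) * of_nat (fact L)"
    by (simp only: fact_Suc of_nat_mult of_nat_id)
  have nz: "(of_nat (Suc L) :: complex) \<noteq> 0" by (simp only: of_nat_eq_0_iff)
  show ?thesis unfolding f using nz by (simp add: field_simps del: of_nat_Suc)
qed

lemma Asum_DG:
  assumes "\<not> e (Suc L)"
  shows "Asum (DG e b) (Suc L) k x = Bsum (G e b) L k x / (p x * u0 x ^ 2)"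
  unfolding Asum_def Bsum_def sum_divide_distrib
proof (rule sum.cong[OF refl])
  fix n
  have "DG e b (Suc L) (iota n) x = of_nat (Suc L) * ((\<Sum>i<d. G e b L (iotad n i) x) / (p x * u0 x ^ 2))"
    using assms by (simp add: iota_nneg dminus_iota)
  then show "DG e b (Suc L) (iota n) x * lampow d lam n / of_nat (fact (Suc L)) =
      (\<Sum>i<d. G e b L (iotad n i) x) * lampow d lam n / of_nat (fact L) / (p x * u0 x ^ 2)"
    using fact_cancel[of L "(\<Sum>i<d. G e b L (iotad n i) x) / (p x * u0 x ^ 2)" "lampow d lam n"]
    by simp
qed

lemma Bsum_DG:
  assumes alt: "\<And>k. e (Suc k) = (\<not> e k)" and eL: "e (Suc L)" and x: "x \<in> I"
  shows "Bsum (DG e b) (Suc L) (Suc k) x = u0 x * (\<Sum>i<d. lam i * (r i x * u0 x * Asum (G e b) L k x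
     + s i x * (u0 x * Asum (DG e b) L k x + du x * Asum (G e b) L k x)))"
proof -
  have nL: "\<not> e L" using alt[of L] eL by simp
  define H where "H i m = r i x * (u0 x * G e b L (iota m) x) + s i x * (u0 x * DG e b L (iota m) x + du x * G e b L (iota m) x)" for i m
  have Rop_eq: "Rop r s I i (\<lambda>t'. u0 t' * G e b L (iota m) t') x = H i m" for i m
  proof -
    have "((\<lambda>t'. u0 t' * G e b L (iota m) t') has_vector_derivative (u0 x * DG e b L (iota m) x + du x * G e b L (iota m) x)) (at x within I)"
      using Gi[OF alt nL] x by (intro has_vector_derivative_mult u0d) auto
    then show ?thesis using vd_unique[OF x] by (simp add: Rop_def H_def)
  qed
  define Fi where "Fi i n = of_nat (Suc L) * (u0 x * Rop r s I i (\<lambda>t'. u0 t' * G e b L (dminus (iotad n i) i) t') x) * lampow d lam n / of_nat (fact (Suc L))" for i n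
  have DGd: "DG e b (Suc L) (iotad n i) x * lampow d lam n / of_nat (fact (Suc L)) = (if n i = 0 then 0 else Fi i n)" if i: "i < d" for n i
  proof (cases "n i = 0")
    case True
    then show ?thesis using i by (simp add: iotad_neg)
  next
    case False
    then show ?thesis using i eL by (simp add: iotad_neg the_iotad Fi_def Let_def)
  qed
  have "Bsum (DG e b) (Suc L) (Suc k) x = (\<Sum>n\<in>lev d (Suc k). \<Sum>i<d. DG e b (Suc L) (iotad n i) x * lampow d lam n / of_nat (fact (Suc L)))"
    unfolding Bsum_def by (simp add: sum_distrib_right sum_divide_distrib)
  also have "\<dots> = (\<Sum>i<d. \<Sum>n\<in>lev d (Suc k). if n i = 0 then 0 else Fi i n)"
    by (subst sum.swap) (rule sum.cong[OF refl], rule sum.cong[OF refl], rule DGd, simp)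
  also have "\<dots> = (\<Sum>i<d. \<Sum>m\<in>lev d k. Fi i (m(i := Suc (m i))))"
    by (intro sum.cong refl lev_reindex) auto
  also have "\<dots> = (\<Sum>i<d. u0 x * (lam i * (r i x * u0 x * Asum (G e b) L k x
     + s i x * (u0 x * Asum (DG e b) L k x + du x * Asum (G e b) L k x))))"
  proof (intro sum.cong refl)
    fix i assume i: "i \<in> {..<d}"
    have "Fi i (m(i := Suc (m i))) = (u0 x * lam i * H i m) * lampow d lam m / of_nat (fact L)" for m
      using fact_cancel[of L "u0 x * lam i * H i m" "lampow d lam m"] i
      by (simp add: Fi_def dminus_iotad Rop_eq lampow_upd mult_ac)
    then have "(\<Sum>m\<in>lev d k. Fi i (m(i := Suc (m i)))) = (\<Sum>m\<in>lev d k. (u0 x * lam i * H i m) * lampow d lam m / of_nat (fact L))"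
      by simp
    also have "\<dots> = u0 x * (lam i * (r i x * u0 x * Asum (G e b) L k x
     + s i x * (u0 x * Asum (DG e b) L k x + du x * Asum (G e b) L k x)))"
      unfolding Asum_def H_def by (simp add: sum_distrib_left sum.distrib ring_distribs sum_divide_distrib add_divide_distrib mult_ac)
    finally show "(\<Sum>m\<in>lev d k. Fi i (m(i := Suc (m i)))) = u0 x * (lam i * (r i x * u0 x * Asum (G e b) L k x
     + s i x * (u0 x * Asum (DG e b) L k x + du x * Asum (G e b) L k x)))" .
  qed
  also have "\<dots> = u0 x * (\<Sum>i<d. lam i * (r i x * u0 x * Asum (G e b) L k x
     + s i x * (u0 x * Asum (DG e b) L k x + du x * Asum (G e b) L k x)))"
    by (simp add: sum_distrib_left)
  finally show ?thesis .
qed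

end


lemma cont_bound:
  fixes f :: "real \<Rightarrow> complex"
  assumes "continuous_on {a..b} f"
  obtains C where "C \<ge> 0" "\<And>x. x \<in> {a..b} \<Longrightarrow> norm (f x) \<le> C"
proof -
  have "bounded (f ` {a..b})" using compact_continuous_image[OF assms compact_Icc] by (rule compact_imp_bounded)
  then obtain C where "C > 0" "\<And>y. y \<in> f ` {a..b} \<Longrightarrow> norm y \<le> C" by (auto simp: bounded_pos)
  then show ?thesis using that[of C] by auto
qed

lemma ul_cong_lim: "uniform_limit X f h F \<Longrightarrow> (\<And>x. x \<in> X \<Longrightarrow> h x = i x) \<Longrightarrow> uniform_limit X f i F"
  using uniform_limit_cong'[of X f f h i F] by blast

context sett begin

definition "alpha x = u0 x * (\<Sum>i<d. lam i * (r i x * u0 x + s i x * du x))"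
definition "beta x = (\<Sum>i<d. lam i * s i x / p x)"

lemma alpha_cont: "continuous_on I alpha"
  unfolding alpha_def[abs_def] using u0c duc rc sc
  by (intro continuous_intros continuous_on_sum) auto

lemma beta_cont: "continuous_on I beta"
  unfolding beta_def[abs_def] using pc pnz sc
  by (intro continuous_intros continuous_on_sum) auto

lemma gam_cont: "continuous_on I (\<lambda>x. 1 / (p x * u0 x ^ 2))"
  using pc pnz u0c unz by (intro continuous_intros) auto

lemma bounds:
  fixes A B :: "nat \<Rightarrow> real \<Rightarrow> complex"
  assumes dA: "\<And>k x. x \<in> I \<Longrightarrow> (A k has_vector_derivative B k x / (p x * u0 x ^ 2)) (at x within I)"
    and dB: "\<And>k x. x \<in> I \<Longrightarrow> (B (Suc k) has_vector_derivative alpha x * A k x + beta x * B k x) (at x within I)"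
    and A0: "\<And>k. A (Suc k) x0 = 0" and B0: "\<And>k. B (Suc k) x0 = 0"
    and c0: "c0 \<ge> 0" "\<And>x. x \<in> I \<Longrightarrow> norm (A 0 x) \<le> c0" "\<And>x. x \<in> I \<Longrightarrow> norm (B 0 x) \<le> c0"
    and Ca: "\<And>x. x \<in> I \<Longrightarrow> norm (alpha x) \<le> Ca"
    and Cb: "\<And>x. x \<in> I \<Longrightarrow> norm (beta x) \<le> Cb"
    and Cg: "\<And>x. x \<in> I \<Longrightarrow> norm (1 / (p x * u0 x ^ 2)) \<le> Cg"
    and K: "Ca + Cb \<le> K" "Cg * (Ca + Cb) * (x2 - x1) \<le> K" "Ca \<ge> 0" "Cb \<ge> 0" "Cg \<ge> 0"
  shows "\<forall>x\<in>I. norm (A k x) \<le> c0 * K ^ k * \<bar>x - x0\<bar> ^ k / fact k \<and>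
                norm (B k x) \<le> c0 * K ^ k * \<bar>x - x0\<bar> ^ k / fact k"
proof (induction k)
  case 0
  then show ?case using c0 by auto
next
  case (Suc k)
  define M where "M = Ca + Cb"
  have M0: "M \<ge> 0" using K by (simp add: M_def)
  have K0: "K \<ge> 0" using K M0 M_def by linarith
  define bnd where "bnd t = c0 * K ^ k * \<bar>t - x0\<bar> ^ k / fact k" for t
  have bnd0: "bnd t \<ge> 0" for t using c0 K0 by (simp add: bnd_def)
  have gB: "norm (alpha t * A k t + beta t * B k t) \<le> (M * c0 * K ^ k / fact k) * \<bar>t - x0\<bar> ^ k" if t: "t \<in> I" for t
  proof -
    have "norm (alpha t * A k t + beta t * B k t) \<le> norm (alpha t) * norm (A k t) + norm (beta t) * norm (B k t)"
      by (metis norm_mult norm_triangle_ineq)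
    also have "\<dots> \<le> Ca * bnd t + Cb * bnd t"
      using Suc.IH t Ca[OF t] Cb[OF t] K(3,4)
      by (intro add_mono mult_mono) (auto simp: bnd_def)
    also have "\<dots> = (M * c0 * K ^ k / fact k) * \<bar>t - x0\<bar> ^ k" by (simp add: bnd_def M_def algebra_simps add_divide_distrib)
    finally show ?thesis .
  qed
  have Bb: "norm (B (Suc k) x) \<le> (M * c0 * K ^ k / fact k) * \<bar>x - x0\<bar> ^ Suc k / Suc k" if x: "x \<in> I" for x
    using deriv_bound[OF x0I x dB B0 gB] by simp
  have Bb2: "norm (B (Suc k) x) \<le> c0 * K ^ Suc k * \<bar>x - x0\<bar> ^ Suc k / fact (Suc k)" if x: "x \<in> I" for x
  proof -
    have "(M * c0 * K ^ k / fact k) * \<bar>x - x0\<bar> ^ Suc k / Suc k = M * (c0 * K ^ k * \<bar>x - x0\<bar> ^ Suc k / fact (Suc k))"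
      by (simp add: fact_Suc field_simps)
    also have "\<dots> \<le> K * (c0 * K ^ k * \<bar>x - x0\<bar> ^ Suc k / fact (Suc k))"
      using K(1) M_def c0 K0 by (intro mult_right_mono) auto
    finally show ?thesis using Bb[OF x] by (simp add: mult_ac)
  qed
  have gA: "norm (B (Suc k) t / (p t * u0 t ^ 2)) \<le> (Cg * M * c0 * K ^ k / fact (Suc k)) * \<bar>t - x0\<bar> ^ Suc k" if t: "t \<in> I" for t
  proof -
    have "norm (B (Suc k) t / (p t * u0 t ^ 2)) = norm (B (Suc k) t) * norm (1 / (p t * u0 t ^ 2))"
      by (simp add: norm_divide)
    also have "\<dots> \<le> ((M * c0 * K ^ k / fact k) * \<bar>t - x0\<bar> ^ Suc k / Suc k) * Cg"
      using Bb[OF t] Cg[OF t] M0 c0 K0 by (intro mult_mono) auto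
    also have "\<dots> = (Cg * M * c0 * K ^ k / fact (Suc k)) * \<bar>t - x0\<bar> ^ Suc k"
      by (simp add: fact_Suc field_simps)
    finally show ?thesis .
  qed
  have Ab: "norm (A (Suc k) x) \<le> c0 * K ^ Suc k * \<bar>x - x0\<bar> ^ Suc k / fact (Suc k)" if x: "x \<in> I" for x
  proof -
    have "norm (A (Suc k) x) \<le> (Cg * M * c0 * K ^ k / fact (Suc k)) * \<bar>x - x0\<bar> ^ Suc (Suc k) / Suc (Suc k)"
      using deriv_bound[OF x0I x dA A0 gA] by simp
    also have "\<dots> \<le> (Cg * M * c0 * K ^ k / fact (Suc k)) * (\<bar>x - x0\<bar> ^ Suc k * (x2 - x1))"
    proof -
      have "\<bar>x - x0\<bar> \<le> x2 - x1" using x x0I by auto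
      have h0: "\<bar>x - x0\<bar> ^ Suc (Suc k) \<ge> 0" by simp
      have "\<bar>x - x0\<bar> ^ Suc (Suc k) / real (Suc (Suc k)) \<le> \<bar>x - x0\<bar> ^ Suc (Suc k) / 1"
        by (rule divide_left_mono[OF _ h0]) auto
      also have "\<dots> = \<bar>x - x0\<bar> ^ Suc k * \<bar>x - x0\<bar>" by simp
      also have "\<dots> \<le> \<bar>x - x0\<bar> ^ Suc k * (x2 - x1)"
        by (rule mult_left_mono) (use \<open>\<bar>x - x0\<bar> \<le> x2 - x1\<close> in auto)
      finally have "\<bar>x - x0\<bar> ^ Suc (Suc k) / Suc (Suc k) \<le> \<bar>x - x0\<bar> ^ Suc k * (x2 - x1)" by simp
      moreover have "Cg * M * c0 * K ^ k / fact (Suc k) \<ge> 0" using K(5) M0 c0 K0 by simp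
      ultimately show ?thesis
        by (metis (no_types, lifting) mult_left_mono times_divide_eq_right)
    qed
    also have "\<dots> = (Cg * M * (x2 - x1)) * (c0 * K ^ k * \<bar>x - x0\<bar> ^ Suc k / fact (Suc k))"
      by (simp add: field_simps)
    also have "\<dots> \<le> K * (c0 * K ^ k * \<bar>x - x0\<bar> ^ Suc k / fact (Suc k))"
      using K(2) M_def c0 K0 by (intro mult_right_mono) auto
    finally show ?thesis by (simp add: mult_ac)
  qed
  show ?case using Ab Bb2 by auto
qed

lemma conv:
  fixes A B :: "nat \<Rightarrow> real \<Rightarrow> complex"
  assumes dA: "\<And>k x. x \<in> I \<Longrightarrow> (A k has_vector_derivative B k x / (p x * u0 x ^ 2)) (at x within I)"
    and dB0: "\<And>x. x \<in> I \<Longrightarrow> (B 0 has_vector_derivative 0) (at x within I)"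
    and dB: "\<And>k x. x \<in> I \<Longrightarrow> (B (Suc k) has_vector_derivative alpha x * A k x + beta x * B k x) (at x within I)"
    and A0: "\<And>k. A (Suc k) x0 = 0" and B0: "\<And>k. B (Suc k) x0 = 0"
    and c0: "c0 \<ge> 0" "\<And>x. x \<in> I \<Longrightarrow> norm (A 0 x) \<le> c0" "\<And>x. x \<in> I \<Longrightarrow> norm (B 0 x) \<le> c0"
  shows "\<exists>S T. uniform_limit I (\<lambda>N x. \<Sum>k<N. A k x) S sequentially \<and>
     uniform_limit I (\<lambda>N x. \<Sum>k<N. B k x) T sequentially \<and>
     (\<forall>x\<in>I. (S has_vector_derivative T x / (p x * u0 x ^ 2)) (at x within I) \<and>
              (T has_vector_derivative alpha x * S x + beta x * T x) (at x within I))"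
proof -
  obtain Ca where Ca: "Ca \<ge> 0" "\<And>x. x \<in> I \<Longrightarrow> norm (alpha x) \<le> Ca"
    using cont_bound[OF alpha_cont] by blast
  obtain Cb where Cb: "Cb \<ge> 0" "\<And>x. x \<in> I \<Longrightarrow> norm (beta x) \<le> Cb"
    using cont_bound[OF beta_cont] by blast
  obtain Cg where Cg: "Cg \<ge> 0" "\<And>x. x \<in> I \<Longrightarrow> norm (1 / (p x * u0 x ^ 2)) \<le> Cg"
    using cont_bound[OF gam_cont] by blast
  define Lg where "Lg = x2 - x1"
  have Lg0: "Lg \<ge> 0" using x12 by (simp add: Lg_def)
  define K where "K = (Ca + Cb) * (1 + Cg * Lg)"
  have K0: "K \<ge> 0" using Ca Cb Cg Lg0 by (simp add: K_def)
  have K1: "Ca + Cb \<le> K" using Ca Cb Cg Lg0 by (simp add: K_def algebra_simps)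
  have K2: "Cg * (Ca + Cb) * (x2 - x1) \<le> K" using Ca Cb Cg Lg0 by (simp add: K_def Lg_def algebra_simps)
  note bd = bounds[OF dA dB A0 B0 c0 Ca(2) Cb(2) Cg(2) K1 K2 Ca(1) Cb(1) Cg(1)]
  define Mk where "Mk k = c0 * ((K * Lg) ^ k / fact k)" for k
  have sumM: "summable Mk"
  proof -
    have "summable (\<lambda>n. (K * Lg) ^ n /\<^sub>R fact n)" by (rule summable_exp_generic)
    then have "summable (\<lambda>n. c0 * ((K * Lg) ^ n /\<^sub>R fact n))" by (rule summable_mult)
    then have "summable (\<lambda>n. c0 * ((K * Lg) ^ n / fact n))" by (simp add: divide_inverse mult_ac)
    then show ?thesis by (simp add: Mk_def[abs_def])
  qed
  have pw: "c0 * K ^ k * \<bar>x - x0\<bar> ^ k / fact k \<le> Mk k" if x: "x \<in> I" for k x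
  proof -
    have "\<bar>x - x0\<bar> ^ k \<le> Lg ^ k" using x x0I by (intro power_mono) (auto simp: Lg_def)
    then have "c0 * K ^ k * \<bar>x - x0\<bar> ^ k \<le> c0 * K ^ k * Lg ^ k" using c0 K0 by (intro mult_left_mono) auto
    then show ?thesis by (simp add: Mk_def divide_right_mono power_mult_distrib mult_ac)
  qed
  have bA: "norm (A k x) \<le> Mk k" if "x \<in> I" for k x using that bd[of k] pw[OF that, of k] by (meson order_trans)
  have bB: "norm (B k x) \<le> Mk k" if "x \<in> I" for k x using that bd[of k] pw[OF that, of k] by (meson order_trans)
  have ulA: "uniform_limit I (\<lambda>N x. \<Sum>k<N. A k x) (\<lambda>x. \<Sum>k. A k x) sequentially"
    using bA sumM by (rule Weierstrass_m_test)
  have ulB: "uniform_limit I (\<lambda>N x. \<Sum>k<N. B k x) (\<lambda>x. \<Sum>k. B k x) sequentially"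
    using bB sumM by (rule Weierstrass_m_test)
  define S where "S x = (\<Sum>k. A k x)" for x
  define T where "T x = (\<Sum>k. B k x)" for x
  have smA: "summable (\<lambda>k. A k x)" if "x \<in> I" for x
    by (rule summable_comparison_test'[OF sumM]) (rule bA[OF that])
  have smB: "summable (\<lambda>k. B k x)" if "x \<in> I" for x
    by (rule summable_comparison_test'[OF sumM]) (rule bB[OF that])
  have ulB': "uniform_limit I (\<lambda>N x. \<Sum>k<N. B k x / (p x * u0 x ^ 2)) (\<lambda>x. T x / (p x * u0 x ^ 2)) sequentially"
  proof -
    have b: "norm (B k x / (p x * u0 x ^ 2)) \<le> Cg * Mk k" if x: "x \<in> I" for k x
    proof -
      have "norm (B k x / (p x * u0 x ^ 2)) = norm (1 / (p x * u0 x ^ 2)) * norm (B k x)"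
        by (simp add: norm_divide)
      also have "\<dots> \<le> Cg * Mk k" using Cg(2)[OF x] bB[OF x] Cg(1) by (intro mult_mono) auto
      finally show ?thesis .
    qed
    have "uniform_limit I (\<lambda>N x. \<Sum>k<N. B k x / (p x * u0 x ^ 2)) (\<lambda>x. \<Sum>k. B k x / (p x * u0 x ^ 2)) sequentially"
      using b summable_mult[OF sumM, of Cg] by (rule Weierstrass_m_test)
    moreover have "x \<in> I \<Longrightarrow> (\<Sum>k. B k x / (p x * u0 x ^ 2)) = T x / (p x * u0 x ^ 2)" for x
      using suminf_divide[OF smB] by (simp add: T_def)
    ultimately show ?thesis
      by (rule ul_cong_lim)
  qed
  define f' where "f' k x = (case k of 0 \<Rightarrow> 0 | Suc k' \<Rightarrow> alpha x * A k' x + beta x * B k' x)" for k x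
  define Mf where "Mf k = (case k of 0 \<Rightarrow> 0 | Suc k' \<Rightarrow> (Ca + Cb) * Mk k')" for k
  have df: "(B k has_vector_derivative f' k x) (at x within I)" if "x \<in> I" for k x
    using that dB0 dB by (cases k) (auto simp: f'_def)
  have bf: "norm (f' k x) \<le> Mf k" if x: "x \<in> I" for k x
  proof (cases k)
    case 0 then show ?thesis by (simp add: f'_def Mf_def)
  next
    case (Suc k')
    have "norm (alpha x * A k' x + beta x * B k' x) \<le> norm (alpha x) * norm (A k' x) + norm (beta x) * norm (B k' x)"
      by (metis norm_mult norm_triangle_ineq)
    also have "\<dots> \<le> Ca * Mk k' + Cb * Mk k'"
      using Ca(1) Cb(1) Ca(2)[OF x] Cb(2)[OF x] bA[OF x] bB[OF x] by (intro add_mono mult_mono) auto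
    finally show ?thesis using Suc by (simp add: f'_def Mf_def algebra_simps)
  qed
  have sumMf: "summable Mf"
    using summable_mult[OF sumM, of "Ca + Cb"] by (subst summable_Suc_iff[symmetric]) (simp add: Mf_def[abs_def])
  have ulf: "uniform_limit I (\<lambda>N x. \<Sum>k<N. f' k x) (\<lambda>x. alpha x * S x + beta x * T x) sequentially"
  proof -
    have "uniform_limit I (\<lambda>N x. \<Sum>k<N. f' k x) (\<lambda>x. \<Sum>k. f' k x) sequentially"
      using bf sumMf by (rule Weierstrass_m_test)
    moreover have "(\<Sum>k. f' k x) = alpha x * S x + beta x * T x" if x: "x \<in> I" for x
    proof -
      have sf: "summable (\<lambda>k. f' k x)"
        by (rule summable_comparison_test'[OF sumMf]) (rule bf[OF x])
      have "(\<Sum>k. f' k x) = (\<Sum>k. f' (Suc k) x)" using suminf_split_head[OF sf] by (simp add: f'_def)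
      also have "\<dots> = (\<Sum>k. alpha x * A k x + beta x * B k x)" by (simp add: f'_def)
      also have "\<dots> = alpha x * S x + beta x * T x"
        using suminf_add[OF summable_mult[OF smA[OF x]] summable_mult[OF smB[OF x]]]
          suminf_mult[OF smA[OF x]] suminf_mult[OF smB[OF x]]
        by (simp add: S_def T_def)
      finally show ?thesis .
    qed
    ultimately show ?thesis
      by (rule ul_cong_lim)
  qed
  have limA: "(\<lambda>N. \<Sum>k<N. A k x) \<longlonglongrightarrow> S x" if "x \<in> I" for x
    using tendsto_uniform_limitI[OF ulA that] by (simp add: S_def)
  have limB: "(\<lambda>N. \<Sum>k<N. B k x) \<longlonglongrightarrow> T x" if "x \<in> I" for x
    using tendsto_uniform_limitI[OF ulB that] by (simp add: T_def)
  have "\<forall>x\<in>I. (S has_vector_derivative T x / (p x * u0 x ^ 2)) (at x within I) \<and>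
              (T has_vector_derivative alpha x * S x + beta x * T x) (at x within I)"
  proof
    fix x assume x: "x \<in> I"
    show "(S has_vector_derivative T x / (p x * u0 x ^ 2)) (at x within I) \<and>
              (T has_vector_derivative alpha x * S x + beta x * T x) (at x within I)"
    proof
      show "(S has_vector_derivative T x / (p x * u0 x ^ 2)) (at x within I)"
        using termwise_vd[where G="\<lambda>x. T x / (p x * u0 x ^ 2)", OF dA ulB' limA x] .
      show "(T has_vector_derivative alpha x * S x + beta x * T x) (at x within I)"
        using termwise_vd[where G="\<lambda>x. alpha x * S x + beta x * T x", OF df ulf limB x] .
    qed
  qed
  then show ?thesis using ulA ulB unfolding S_def[abs_def] T_def[abs_def] by blast
qed

end


lemma lev0: "lev d 0 = {\<lambda>_. 0}"
proof (intro equalityI subsetI)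
  fix n assume n: "n \<in> lev d 0"
  then have "\<forall>i<d. n i = 0" by (auto simp: lev_def msize_def)
  then show "n \<in> {\<lambda>_. 0}" using n by (auto simp: lev_def fun_eq_iff not_less[symmetric])
qed (auto simp: lev_def msize_def)

lemma sum_first_only:
  fixes f :: "nat \<Rightarrow> complex"
  assumes "\<And>k. f (Suc k) = 0" "(\<lambda>N. \<Sum>k<N. f k) \<longlonglongrightarrow> L"
  shows "L = f 0"
proof -
  have "(\<Sum>k<Suc N. f k) = f 0" for N using assms(1) by (induction N) auto
  then have "(\<lambda>N. f 0) \<longlonglongrightarrow> L" using LIMSEQ_Suc[OF assms(2)] by simp
  then show ?thesis by (rule LIMSEQ_const_iff[THEN iffD1, symmetric])
qed

definition "b1 d = (\<lambda>j::nat\<Rightarrow>int. if (\<forall>i<d. j i = 0) then (1::complex) else 0)"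
definition "b2 d = (\<lambda>m::nat\<Rightarrow>int. if (\<exists>i<d. \<forall>l<d. m l = (if l = i then -1 else 0)) then 1 / (of_nat d::complex) else 0)"

context sett begin

lemma G_x0: "G e b (Suc L) j x0 = 0"
  by (simp add: Let_def)

lemma Asum_x0: "Asum (G e b) (Suc L) k x0 = 0"
  unfolding Asum_def by (simp only: G_x0) simp

lemma Bsum_x0: "Bsum (G e b) (Suc L) k x0 = 0"
  unfolding Bsum_def by (simp only: G_x0) simp

lemma combine:
  assumes x: "x \<in> I"
  shows "u0 x * (\<Sum>i<d. lam i * (r i x * u0 x * a + s i x * (u0 x * (bb / (p x * u0 x ^ 2)) + du x * a)))
    = alpha x * a + beta x * bb"
proof -
  have "u0 x * (\<Sum>i<d. lam i * (r i x * u0 x * a + s i x * (u0 x * (bb / (p x * u0 x ^ 2)) + du x * a)))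
     = (\<Sum>i<d. u0 x * (lam i * (r i x * u0 x + s i x * du x)) * a + lam i * s i x / p x * bb)"
    unfolding sum_distrib_left
  proof (intro sum.cong refl)
    fix i
    show "u0 x * (lam i * (r i x * u0 x * a + s i x * (u0 x * (bb / (p x * u0 x ^ 2)) + du x * a))) =
         u0 x * (lam i * (r i x * u0 x + s i x * du x)) * a + lam i * s i x / p x * bb"
      using pnz[OF x] unz[OF x] by (simp add: field_simps power2_eq_square)
  qed
  also have "\<dots> = alpha x * a + beta x * bb"
    by (simp add: alpha_def beta_def sum.distrib sum_distrib_left sum_distrib_right mult_ac)
  finally show ?thesis .
qed


definition "A1 k x = (\<Sum>n\<in>lev d k. Xtilde d p u0 r s x0 I (iota n) x * lampow d lam n / of_nat (fact (2 * k)))"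
definition "B1 k x = (\<Sum>n\<in>lev d k. (\<Sum>i<d. Xtilde d p u0 r s x0 I (iotad n i) x) * lampow d lam n / of_nat (fact (2 * k - 1)))"
definition "A2 k x = (\<Sum>n\<in>lev d k. Xgen d p u0 r s x0 I (iota n) x * lampow d lam n / of_nat (fact (2 * k + 1)))"
definition "B2 k x = (\<Sum>n\<in>lev d k. (\<Sum>i<d. Xgen d p u0 r s x0 I (iotad n i) x) * lampow d lam n / of_nat (fact (2 * k)))"

lemma Xt_iota: "Xtilde d p u0 r s x0 I (iota n) = G odd (b1 d) (2 * msize d n) (iota n)"
proof -
  have "nat (2 * int (msize d n)) = 2 * msize d n" by simp
  then show ?thesis by (simp add: Xtilde_def sum_iota XtL_GL b1_def[abs_def])
qed

lemma Xt_iotad: "i < d \<Longrightarrow> msize d n \<noteq> 0 \<Longrightarrow> Xtilde d p u0 r s x0 I (iotad n i) = G odd (b1 d) (2 * msize d n - 1) (iotad n i)"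
proof -
  assume "i < d" "msize d n \<noteq> 0"
  moreover have "nat (2 * int (msize d n) - 1) = 2 * msize d n - 1" by simp
  ultimately show ?thesis by (simp add: Xtilde_def sum_iotad XtL_GL b1_def[abs_def])
qed

lemma Xt_iotad0: "i < d \<Longrightarrow> msize d n = 0 \<Longrightarrow> Xtilde d p u0 r s x0 I (iotad n i) = (\<lambda>_. 0)"
  by (simp add: Xtilde_def sum_iotad)

lemma Xg_iota: "Xgen d p u0 r s x0 I (iota n) = G even (b2 d) (2 * msize d n + 1) (iota n)"
proof -
  have "nat (2 * int (msize d n) + 1) = 2 * msize d n + 1" by simp
  then show ?thesis by (simp add: Xgen_def sum_iota XL_GL b2_def[abs_def])
qed

lemma Xg_iotad: "i < d \<Longrightarrow> Xgen d p u0 r s x0 I (iotad n i) = G even (b2 d) (2 * msize d n) (iotad n i)"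
proof -
  assume "i < d"
  moreover have "nat (2 * int (msize d n) - 1 + 1) = 2 * msize d n" by simp
  ultimately show ?thesis by (simp add: Xgen_def sum_iotad XL_GL b2_def[abs_def])
qed

lemma A1_eq: "A1 k = Asum (G odd (b1 d)) (2 * k) k"
  unfolding A1_def[abs_def] Asum_def[abs_def]
  by (intro ext sum.cong refl) (auto simp: lev_def Xt_iota)

lemma B1_eq: "B1 (Suc k) = Bsum (G odd (b1 d)) (2 * k + 1) (Suc k)"
  unfolding B1_def[abs_def] Bsum_def[abs_def]
  by (intro ext sum.cong refl) (auto simp: lev_def Xt_iotad)

lemma B1_0: "B1 0 = (\<lambda>_. 0)"
  unfolding B1_def[abs_def]
  by (intro ext sum.neutral ballI) (auto simp: lev_def Xt_iotad0)

lemma A2_eq: "A2 k = Asum (G even (b2 d)) (2 * k + 1) k"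
  unfolding A2_def[abs_def] Asum_def[abs_def]
  by (intro ext sum.cong refl) (auto simp: lev_def Xg_iota)

lemma B2_eq: "B2 k = Bsum (G even (b2 d)) (2 * k) k"
  unfolding B2_def[abs_def] Bsum_def[abs_def]
  by (intro ext sum.cong refl) (auto simp: lev_def Xg_iotad)

lemma alt1: "odd (Suc k) = (\<not> odd k)" by simp
lemma alt2: "even (Suc k) = (\<not> even k)" by simp

lemma Asum_DG0: "Asum (DG e b) 0 k x = 0"
  by (simp add: Asum_def)

lemma Bsum_DG0: "Bsum (DG e b) 0 k x = 0"
  by (simp add: Bsum_def)

lemma fam1_dA: "x \<in> I \<Longrightarrow> (A1 k has_vector_derivative B1 k x / (p x * u0 x ^ 2)) (at x within I)"
proof (cases k)
  case 0
  assume x: "x \<in> I"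
  have "(Asum (G odd (b1 d)) 0 0 has_vector_derivative Asum (DG odd (b1 d)) 0 0 x) (at x within I)"
    using x by (intro Asum_vd alt1) auto
  then show ?thesis using 0 by (simp add: A1_eq B1_0 Asum_DG0)
next
  case (Suc k')
  assume x: "x \<in> I"
  have e: "2 * Suc k' = Suc (2 * k' + 1)" by simp
  have A1s: "A1 (Suc k') = Asum (G odd (b1 d)) (Suc (2 * k' + 1)) (Suc k')" by (simp only: A1_eq e)
  have "(Asum (G odd (b1 d)) (Suc (2 * k' + 1)) (Suc k') has_vector_derivative Asum (DG odd (b1 d)) (Suc (2 * k' + 1)) (Suc k') x) (at x within I)"
    using x by (intro Asum_vd alt1) auto
  moreover have "Asum (DG odd (b1 d)) (Suc (2 * k' + 1)) (Suc k') x = B1 (Suc k') x / (p x * u0 x ^ 2)"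
    by (subst Asum_DG) (auto simp: B1_eq)
  ultimately show ?thesis unfolding Suc A1s by simp
qed

lemma fam1_ADG: "Asum (DG odd (b1 d)) (2 * k) k x = B1 k x / (p x * u0 x ^ 2)"
proof (cases k)
  case 0 then show ?thesis by (simp add: Asum_DG0 B1_0)
next
  case (Suc k')
  have e: "2 * Suc k' = Suc (2 * k' + 1)" by simp
  show ?thesis unfolding Suc e by (subst Asum_DG) (auto simp: B1_eq)
qed

lemma fam1_dB: "x \<in> I \<Longrightarrow> (B1 (Suc k) has_vector_derivative alpha x * A1 k x + beta x * B1 k x) (at x within I)"
proof -
  assume x: "x \<in> I"
  have "(Bsum (G odd (b1 d)) (Suc (2 * k)) (Suc k) has_vector_derivative Bsum (DG odd (b1 d)) (Suc (2 * k)) (Suc k) x) (at x within I)"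
    using x by (intro Bsum_vd alt1) auto
  moreover have "Bsum (DG odd (b1 d)) (Suc (2 * k)) (Suc k) x = alpha x * A1 k x + beta x * B1 k x"
  proof -
    have "Bsum (DG odd (b1 d)) (Suc (2 * k)) (Suc k) x = u0 x * (\<Sum>i<d. lam i * (r i x * u0 x * Asum (G odd (b1 d)) (2 * k) k x
     + s i x * (u0 x * Asum (DG odd (b1 d)) (2 * k) k x + du x * Asum (G odd (b1 d)) (2 * k) k x)))"
      by (rule Bsum_DG[where e=odd, OF alt1 _ x]) simp
    also have "\<dots> = u0 x * (\<Sum>i<d. lam i * (r i x * u0 x * A1 k x
     + s i x * (u0 x * (B1 k x / (p x * u0 x ^ 2)) + du x * A1 k x)))"
      by (simp only: fam1_ADG A1_eq[symmetric])
    also have "\<dots> = alpha x * A1 k x + beta x * B1 k x" by (rule combine[OF x])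
    finally show ?thesis .
  qed
  ultimately show ?thesis by (simp add: B1_eq)
qed

lemma fam1_A0: "A1 (Suc k) x0 = 0"
proof -
  have e: "2 * Suc k = Suc (2 * k + 1)" by simp
  show ?thesis unfolding A1_eq e by (rule Asum_x0)
qed

lemma fam1_B0: "B1 (Suc k) x0 = 0"
  unfolding B1_eq by (simp only: Suc_eq_plus1[symmetric] Bsum_x0)

lemma lampow0: "lampow d lam (\<lambda>_. 0) = 1"
  by (simp add: lampow_def)

lemma fam1_A00: "A1 0 x = 1"
  by (simp add: A1_eq Asum_def lev0 lampow0 iota_def b1_def)

lemma fam2_dA: "x \<in> I \<Longrightarrow> (A2 k has_vector_derivative B2 k x / (p x * u0 x ^ 2)) (at x within I)"
proof -
  assume x: "x \<in> I"
  have "(Asum (G even (b2 d)) (Suc (2 * k)) k has_vector_derivative Asum (DG even (b2 d)) (Suc (2 * k)) k x) (at x within I)"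
    using x by (intro Asum_vd alt2) auto
  then show ?thesis unfolding A2_eq B2_eq by (subst (asm) Asum_DG) auto
qed

lemma fam2_dB0: "x \<in> I \<Longrightarrow> (B2 0 has_vector_derivative 0) (at x within I)"
proof -
  assume x: "x \<in> I"
  have "(Bsum (G even (b2 d)) 0 0 has_vector_derivative Bsum (DG even (b2 d)) 0 0 x) (at x within I)"
    using x by (intro Bsum_vd alt2) auto
  then show ?thesis by (simp add: B2_eq Bsum_DG0)
qed

lemma fam2_dB: "x \<in> I \<Longrightarrow> (B2 (Suc k) has_vector_derivative alpha x * A2 k x + beta x * B2 k x) (at x within I)"
proof -
  assume x: "x \<in> I"
  have e: "2 * Suc k = Suc (2 * k + 1)" by simp
  have "(Bsum (G even (b2 d)) (Suc (2 * k + 1)) (Suc k) has_vector_derivative Bsum (DG even (b2 d)) (Suc (2 * k + 1)) (Suc k) x) (at x within I)"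
    using x by (intro Bsum_vd alt2) auto
  moreover have "Bsum (DG even (b2 d)) (Suc (2 * k + 1)) (Suc k) x = alpha x * A2 k x + beta x * B2 k x"
  proof -
    have "Bsum (DG even (b2 d)) (Suc (2 * k + 1)) (Suc k) x = u0 x * (\<Sum>i<d. lam i * (r i x * u0 x * Asum (G even (b2 d)) (2 * k + 1) k x
     + s i x * (u0 x * Asum (DG even (b2 d)) (2 * k + 1) k x + du x * Asum (G even (b2 d)) (2 * k + 1) k x)))"
      by (rule Bsum_DG[where e=even, OF alt2 _ x]) simp
    also have "Asum (DG even (b2 d)) (2 * k + 1) k x = B2 k x / (p x * u0 x ^ 2)"
      unfolding B2_eq Suc_eq_plus1[symmetric] by (subst Asum_DG) auto
    also have "Asum (G even (b2 d)) (2 * k + 1) k = A2 k" by (simp only: A2_eq)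
    also have "u0 x * (\<Sum>i<d. lam i * (r i x * u0 x * A2 k x
     + s i x * (u0 x * (B2 k x / (p x * u0 x ^ 2)) + du x * A2 k x))) = alpha x * A2 k x + beta x * B2 k x"
      by (rule combine[OF x])
    finally show ?thesis .
  qed
  ultimately show ?thesis unfolding B2_eq[of "Suc k"] e by simp
qed

lemma fam2_A0: "A2 k x0 = 0"
  unfolding A2_eq by (simp only: Suc_eq_plus1[symmetric] Asum_x0)

lemma fam2_B0: "B2 (Suc k) x0 = 0"
proof -
  have e: "2 * Suc k = Suc (2 * k + 1)" by simp
  show ?thesis unfolding B2_eq e by (rule Bsum_x0)
qed

lemma fam2_B00: "B2 0 x = 1"
proof -
  have "B2 0 x = (\<Sum>i<d. b2 d (iotad (\<lambda>_. 0) i))"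
    by (simp add: B2_eq Bsum_def lev0 lampow0)
  also have "\<dots> = (\<Sum>i<d. 1 / of_nat d)"
  proof (intro sum.cong refl)
    fix i assume "i \<in> {..<d}"
    then have "\<exists>i'<d. \<forall>l<d. iotad (\<lambda>_. 0) i l = (if l = i' then -1 else 0)"
      by (intro exI[of _ i]) (auto simp: iotad_def)
    then show "b2 d (iotad (\<lambda>_. 0) i) = 1 / of_nat d" by (simp add: b2_def)
  qed
  also have "\<dots> = 1" using d1 by simp
  finally show ?thesis .
qed

lemma fam2_A0cont: "continuous_on I (A2 0)"
  unfolding A2_eq by (rule Asum_cont) (auto intro: alt2)

end


context sett begin

lemma inv_vd:
  assumes x: "x \<in> I"
  shows "((\<lambda>t. inverse (u0 t)) has_vector_derivative - (du x / (u0 x)^2)) (at x within I)"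
proof -
  have "((\<lambda>t. inverse (u0 t)) has_derivative (\<lambda>h. - (inverse (u0 x) * (h *\<^sub>R du x) * inverse (u0 x)))) (at x within I)"
    using Deriv.has_derivative_inverse[where f=u0 and f'="\<lambda>h. h *\<^sub>R du x" and S=I and x=x] unz[OF x] u0d[OF x]
    by (simp add: has_vector_derivative_def)
  moreover have "(\<lambda>h. - (inverse (u0 x) * (h *\<^sub>R du x) * inverse (u0 x))) = (\<lambda>h. h *\<^sub>R (- (du x / (u0 x)^2)))"
    using unz[OF x] by (auto simp: fun_eq_iff scaleR_conv_of_real field_simps power2_eq_square)
  ultimately show ?thesis by (simp add: has_vector_derivative_def)
qed

lemma udr:
  assumes ST: "\<And>x. x \<in> I \<Longrightarrow> (S has_vector_derivative T x / (p x * u0 x ^ 2)) (at x within I)"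
    and x: "x \<in> I"
  shows "((\<lambda>x. u0 x * S x) has_vector_derivative du x * S x + T x / (p x * u0 x)) (at x within I)"
proof -
  have D: "((\<lambda>x. u0 x * S x) has_vector_derivative u0 x * (T x / (p x * u0 x ^ 2)) + du x * S x) (at x within I)"
    by (intro has_vector_derivative_mult u0d ST x)
  have E: "u0 x * (T x / (p x * u0 x ^ 2)) + du x * S x = du x * S x + T x / (p x * u0 x)"
    using unz[OF x] pnz[OF x] by (simp add: field_simps power2_eq_square)
  show ?thesis using D unfolding E .
qed

lemma solves_from:
  assumes ST: "\<forall>x\<in>I. (S has_vector_derivative T x / (p x * u0 x ^ 2)) (at x within I) \<and>
              (T has_vector_derivative alpha x * S x + beta x * T x) (at x within I)"
  shows "solves d I p q r s lam (\<lambda>x. u0 x * S x)"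
  unfolding solves_def
proof (intro exI ballI conjI)
  fix x assume x: "x \<in> I"
  have S': "\<And>x. x \<in> I \<Longrightarrow> (S has_vector_derivative T x / (p x * u0 x ^ 2)) (at x within I)"
    and T': "\<And>x. x \<in> I \<Longrightarrow> (T has_vector_derivative alpha x * S x + beta x * T x) (at x within I)"
    using ST by auto
  show "((\<lambda>x. u0 x * S x) has_vector_derivative du x * S x + T x / (p x * u0 x)) (at x within I)"
    by (rule udr[OF S' x])
  have D: "((\<lambda>t. (p t * du t) * S t + T t * inverse (u0 t)) has_vector_derivative
     ((p x * du x) * (T x / (p x * u0 x ^ 2)) + w x * S x) + (T x * (- (du x / (u0 x)^2)) + (alpha x * S x + beta x * T x) * inverse (u0 x)))
     (at x within I)"
    by (intro has_vector_derivative_add has_vector_derivative_mult pdud S' T' inv_vd x)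
  have E: "((p x * du x) * (T x / (p x * u0 x ^ 2)) + w x * S x) + (T x * (- (du x / (u0 x)^2)) + (alpha x * S x + beta x * T x) * inverse (u0 x))
     = w x * S x + (alpha x * S x + beta x * T x) / u0 x"
    using unz[OF x] pnz[OF x] by (simp add: field_simps power2_eq_square)
  show "((\<lambda>t. p t * (du t * S t + T t / (p t * u0 t))) has_vector_derivative
      w x * S x + (alpha x * S x + beta x * T x) / u0 x) (at x within I)"
    by (rule has_vector_derivative_transform[OF x _ D[unfolded E]])
       (use pnz unz in \<open>simp add: field_simps\<close>)
  have "(\<Sum>i<d. lam i * (r i x * (u0 x * S x) + s i x * (du x * S x + T x / (p x * u0 x)))) * u0 x
      = u0 x * (\<Sum>i<d. lam i * (r i x * u0 x * S x + s i x * (u0 x * (T x / (p x * u0 x ^ 2)) + du x * S x)))"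
    unfolding sum_distrib_left sum_distrib_right
    using unz[OF x] pnz[OF x] by (intro sum.cong refl) (simp add: field_simps power2_eq_square)
  also have "\<dots> = alpha x * S x + beta x * T x" by (rule combine[OF x])
  finally have "(\<Sum>i<d. lam i * (r i x * (u0 x * S x) + s i x * (du x * S x + T x / (p x * u0 x))))
     = (alpha x * S x + beta x * T x) / u0 x"
    using unz[OF x] by (simp add: field_simps)
  moreover have "w x = - q x * u0 x" using weq[OF x] by (simp add: eq_neg_iff_add_eq_0)
  ultimately show "w x * S x + (alpha x * S x + beta x * T x) / u0 x + q x * (u0 x * S x) =
      (\<Sum>i<d. lam i * (r i x * (u0 x * S x) + s i x * (du x * S x + T x / (p x * u0 x))))"
    by simp
qed

end


lemma ul_Suc: "uniform_limit S f l sequentially \<Longrightarrow> uniform_limit S (\<lambda>N. f (Suc N)) l sequentially"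
  by (rule filterlim_compose[OF _ filterlim_Suc])

lemma finite_midx: "finite (midx d N)"
  unfolding midx_lev by (auto intro: finite_lev)

lemma zero_midx: "(\<lambda>_. 0) \<in> midx d N"
  by (simp add: midx_def)

context sett begin

lemma P1: "(\<Sum>n\<in>midx d N. Xtilde d p u0 r s x0 I (\<lambda>i. 2 * int (n i)) x * lampow d lam n / of_nat (fact (2 * msize d n)))
   = (\<Sum>k<Suc N. A1 k x)"
  unfolding sum_midx lessThan_Suc_atMost A1_def iota_def[symmetric]
  by (intro sum.cong refl) (auto simp: lev_def)

lemma P2: "(\<Sum>n\<in>midx d N. Xgen d p u0 r s x0 I (\<lambda>i. 2 * int (n i)) x * lampow d lam n / of_nat (fact (2 * msize d n + 1)))
   = (\<Sum>k<Suc N. A2 k x)"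
  unfolding sum_midx lessThan_Suc_atMost A2_def iota_def[symmetric]
  by (intro sum.cong refl) (auto simp: lev_def)

lemma PV1: "(\<Sum>n\<in>midx d N - {\<lambda>_. 0}. (\<Sum>i<d. Xtilde d p u0 r s x0 I
                      (\<lambda>l. 2 * int (n l) - (if l = i then 1 else 0)) x) * lampow d lam n
             / of_nat (fact (2 * msize d n - 1))) = (\<Sum>k<Suc N. B1 k x)"
proof -
  let ?f = "\<lambda>n. (\<Sum>i<d. Xtilde d p u0 r s x0 I (iotad n i) x) * lampow d lam n / of_nat (fact (2 * msize d n - 1))"
  have z: "?f (\<lambda>_. 0) = 0"
    by (simp add: Xt_iotad0 msize_def)
  have "(\<Sum>n\<in>midx d N. ?f n) = ?f (\<lambda>_. 0) + (\<Sum>n\<in>midx d N - {\<lambda>_. 0}. ?f n)"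
    by (rule sum.remove[OF finite_midx zero_midx])
  then have "(\<Sum>n\<in>midx d N - {\<lambda>_. 0}. ?f n) = (\<Sum>n\<in>midx d N. ?f n)" using z by simp
  also have "\<dots> = (\<Sum>k<Suc N. B1 k x)"
    unfolding sum_midx lessThan_Suc_atMost B1_def
    by (intro sum.cong refl) (auto simp: lev_def)
  finally show ?thesis by (simp add: iotad_def)
qed

lemma PV2: "(\<Sum>n\<in>midx d N. (\<Sum>i<d. Xgen d p u0 r s x0 I
                      (\<lambda>l. 2 * int (n l) - (if l = i then 1 else 0)) x) * lampow d lam n
             / of_nat (fact (2 * msize d n))) = (\<Sum>k<Suc N. B2 k x)"
  unfolding sum_midx lessThan_Suc_atMost B2_def iotad_def[symmetric]
  by (intro sum.cong refl) (auto simp: lev_def)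

end

theorem mainTheorem7:
  fixes d :: nat and x0 x1 x2 :: real
    and p q u0 :: "real \<Rightarrow> complex" and r s :: "nat \<Rightarrow> real \<Rightarrow> complex"
    and lam :: "nat \<Rightarrow> complex"
  assumes "d \<ge> 1" and "x1 < x2" and "x0 \<in> {x1..x2}"
    and "continuous_on {x1..x2} p" and "continuous_on {x1..x2} q"
    and "\<And>i. i < d \<Longrightarrow> continuous_on {x1..x2} (r i)"
    and "\<And>i. i < d \<Longrightarrow> continuous_on {x1..x2} (s i)"
    and "\<exists>p'. continuous_on {x1..x2} p' \<and>
           (\<forall>x\<in>{x1..x2}. (p has_vector_derivative p' x) (at x within {x1..x2}))"
    and "\<And>x. x \<in> {x1..x2} \<Longrightarrow> p x \<noteq> 0"
    and "solves d {x1..x2} p q r s (\<lambda>_. 0) u0"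
    and "\<And>x. x \<in> {x1..x2} \<Longrightarrow> u0 x \<noteq> 0"
  shows "\<exists>u1 u2 V1 V2.
    uniform_limit {x1..x2}
      (\<lambda>N x. u0 x * (\<Sum>n\<in>midx d N.
          Xtilde d p u0 r s x0 {x1..x2} (\<lambda>i. 2 * int (n i)) x * lampow d lam n
            / of_nat (fact (2 * msize d n))))
      u1 sequentially
  \<and> uniform_limit {x1..x2}
      (\<lambda>N x. u0 x * (\<Sum>n\<in>midx d N.
          Xgen d p u0 r s x0 {x1..x2} (\<lambda>i. 2 * int (n i)) x * lampow d lam n
            / of_nat (fact (2 * msize d n + 1))))
      u2 sequentially
  \<and> solves d {x1..x2} p q r s lam u1
  \<and> solves d {x1..x2} p q r s lam u2
  \<and> (\<forall>a b :: complex. (\<forall>x\<in>{x1..x2}. a * u1 x + b * u2 x = 0) \<longrightarrow> a = 0 \<and> b = 0)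
  \<and> (\<forall>x\<in>{x1..x2}.
        (\<lambda>N. \<Sum>n\<in>midx d N - {\<lambda>_. 0}.
           (\<Sum>i<d. Xtilde d p u0 r s x0 {x1..x2}
                      (\<lambda>l. 2 * int (n l) - (if l = i then 1 else 0)) x) * lampow d lam n
             / of_nat (fact (2 * msize d n - 1)))
        \<longlonglongrightarrow> V1 x)
  \<and> (\<forall>x\<in>{x1..x2}.
        (\<lambda>N. \<Sum>n\<in>midx d N.
           (\<Sum>i<d. Xgen d p u0 r s x0 {x1..x2}
                      (\<lambda>l. 2 * int (n l) - (if l = i then 1 else 0)) x) * lampow d lam n
             / of_nat (fact (2 * msize d n)))
        \<longlonglongrightarrow> V2 x)
  \<and> (\<forall>x\<in>{x1..x2}. (u1 has_vector_derivative
        (vector_derivative u0 (at x within {x1..x2}) / u0 x * u1 x + V1 x / (p x * u0 x)))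
        (at x within {x1..x2}))
  \<and> (\<forall>x\<in>{x1..x2}. (u2 has_vector_derivative
        (vector_derivative u0 (at x within {x1..x2}) / u0 x * u2 x + V2 x / (p x * u0 x)))
        (at x within {x1..x2}))
  \<and> u1 x0 = u0 x0
  \<and> vector_derivative u1 (at x0 within {x1..x2}) = vector_derivative u0 (at x0 within {x1..x2})
  \<and> u2 x0 = 0
  \<and> vector_derivative u2 (at x0 within {x1..x2}) = 1 / (p x0 * u0 x0)"
proof -
  obtain y1 y2 where Y: "\<forall>x\<in>{x1..x2}. (u0 has_vector_derivative y1 x) (at x within {x1..x2})
        \<and> ((\<lambda>t. p t * y1 t) has_vector_derivative y2 x) (at x within {x1..x2})
        \<and> y2 x + q x * u0 x = (\<Sum>i<d. (\<lambda>_. 0) i * (r i x * u0 x + s i x * y1 x))"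
    using assms(10) unfolding solves_def by blast
  interpret sett d x0 x1 x2 p q u0 y1 y2 r s lam
    by unfold_locales (use assms Y in auto)
  have ST1: "\<exists>S T. uniform_limit I (\<lambda>N x. \<Sum>k<N. A1 k x) S sequentially \<and>
     uniform_limit I (\<lambda>N x. \<Sum>k<N. B1 k x) T sequentially \<and>
     (\<forall>x\<in>I. (S has_vector_derivative T x / (p x * u0 x ^ 2)) (at x within I) \<and>
              (T has_vector_derivative alpha x * S x + beta x * T x) (at x within I))"
    by (rule conv[where ?c0.0=1]) (auto simp: fam1_dA fam1_dB fam1_A0 fam1_B0 fam1_A00 B1_0)
  then obtain S1 T1 where U1: "uniform_limit I (\<lambda>N x. \<Sum>k<N. A1 k x) S1 sequentially"
     and W1: "uniform_limit I (\<lambda>N x. \<Sum>k<N. B1 k x) T1 sequentially"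
     and D1: "\<forall>x\<in>I. (S1 has_vector_derivative T1 x / (p x * u0 x ^ 2)) (at x within I) \<and>
              (T1 has_vector_derivative alpha x * S1 x + beta x * T1 x) (at x within I)" by blast
  obtain C2 where C2: "C2 \<ge> 0" "\<And>x. x \<in> I \<Longrightarrow> norm (A2 0 x) \<le> C2"
    using cont_bound[OF fam2_A0cont] by blast
  have ST2: "\<exists>S T. uniform_limit I (\<lambda>N x. \<Sum>k<N. A2 k x) S sequentially \<and>
     uniform_limit I (\<lambda>N x. \<Sum>k<N. B2 k x) T sequentially \<and>
     (\<forall>x\<in>I. (S has_vector_derivative T x / (p x * u0 x ^ 2)) (at x within I) \<and>
              (T has_vector_derivative alpha x * S x + beta x * T x) (at x within I))"
    by (rule conv[where ?c0.0="max 1 C2"])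
       (auto simp: fam2_dA fam2_dB0 fam2_dB fam2_A0 fam2_B0 fam2_B00 intro: order_trans[OF C2(2)])
  then obtain S2 T2 where U2: "uniform_limit I (\<lambda>N x. \<Sum>k<N. A2 k x) S2 sequentially"
     and W2: "uniform_limit I (\<lambda>N x. \<Sum>k<N. B2 k x) T2 sequentially"
     and D2: "\<forall>x\<in>I. (S2 has_vector_derivative T2 x / (p x * u0 x ^ 2)) (at x within I) \<and>
              (T2 has_vector_derivative alpha x * S2 x + beta x * T2 x) (at x within I)" by blast
  have S1x0: "S1 x0 = 1"
    using sum_first_only[OF fam1_A0 tendsto_uniform_limitI[OF U1 x0I]] fam1_A00 by simp
  have T1x0: "T1 x0 = 0"
    using sum_first_only[OF fam1_B0 tendsto_uniform_limitI[OF W1 x0I]] B1_0 by simp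
  have S2x0: "S2 x0 = 0"
    using sum_first_only[OF fam2_A0 tendsto_uniform_limitI[OF U2 x0I]] fam2_A0 by simp
  have T2x0: "T2 x0 = 1"
    using sum_first_only[OF fam2_B0 tendsto_uniform_limitI[OF W2 x0I]] fam2_B00 by simp
  obtain Cu where Cu: "Cu \<ge> 0" "\<And>x. x \<in> I \<Longrightarrow> norm (u0 x) \<le> Cu"
    using cont_bound[OF u0c] by blast
  have du1: "\<And>x. x \<in> I \<Longrightarrow> ((\<lambda>x. u0 x * S1 x) has_vector_derivative y1 x * S1 x + T1 x / (p x * u0 x)) (at x within I)"
    using D1 by (intro udr) auto
  have du2: "\<And>x. x \<in> I \<Longrightarrow> ((\<lambda>x. u0 x * S2 x) has_vector_derivative y1 x * S2 x + T2 x / (p x * u0 x)) (at x within I)"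
    using D2 by (intro udr) auto
  have vdu0: "\<And>x. x \<in> I \<Longrightarrow> vector_derivative u0 (at x within I) = y1 x"
    using vd_unique u0d by blast
  show ?thesis
  proof (rule exI[of _ "\<lambda>x. u0 x * S1 x"], rule exI[of _ "\<lambda>x. u0 x * S2 x"], rule exI[of _ T1], rule exI[of _ T2],
         intro conjI)
    show "uniform_limit {x1..x2}
      (\<lambda>N x. u0 x * (\<Sum>n\<in>midx d N.
          Xtilde d p u0 r s x0 {x1..x2} (\<lambda>i. 2 * int (n i)) x * lampow d lam n
            / of_nat (fact (2 * msize d n))))
      (\<lambda>x. u0 x * S1 x) sequentially"
      unfolding P1 by (rule uniform_limit_cmul_bounded[OF ul_Suc[OF U1] Cu(2)])
    show "uniform_limit {x1..x2}
      (\<lambda>N x. u0 x * (\<Sum>n\<in>midx d N.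
          Xgen d p u0 r s x0 {x1..x2} (\<lambda>i. 2 * int (n i)) x * lampow d lam n
            / of_nat (fact (2 * msize d n + 1))))
      (\<lambda>x. u0 x * S2 x) sequentially"
      unfolding P2 by (rule uniform_limit_cmul_bounded[OF ul_Suc[OF U2] Cu(2)])
    show "solves d {x1..x2} p q r s lam (\<lambda>x. u0 x * S1 x)" using D1 by (rule solves_from)
    show "solves d {x1..x2} p q r s lam (\<lambda>x. u0 x * S2 x)" using D2 by (rule solves_from)
    show "\<forall>x\<in>{x1..x2}.
        (\<lambda>N. \<Sum>n\<in>midx d N - {\<lambda>_. 0}.
           (\<Sum>i<d. Xtilde d p u0 r s x0 {x1..x2}
                      (\<lambda>l. 2 * int (n l) - (if l = i then 1 else 0)) x) * lampow d lam n
             / of_nat (fact (2 * msize d n - 1)))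
        \<longlonglongrightarrow> T1 x"
      unfolding PV1 using LIMSEQ_Suc[OF tendsto_uniform_limitI[OF W1]] by blast
    show "\<forall>x\<in>{x1..x2}.
        (\<lambda>N. \<Sum>n\<in>midx d N.
           (\<Sum>i<d. Xgen d p u0 r s x0 {x1..x2}
                      (\<lambda>l. 2 * int (n l) - (if l = i then 1 else 0)) x) * lampow d lam n
             / of_nat (fact (2 * msize d n)))
        \<longlonglongrightarrow> T2 x"
      unfolding PV2 using LIMSEQ_Suc[OF tendsto_uniform_limitI[OF W2]] by blast
    show "\<forall>x\<in>{x1..x2}. ((\<lambda>x. u0 x * S1 x) has_vector_derivative
        (vector_derivative u0 (at x within {x1..x2}) / u0 x * (u0 x * S1 x) + T1 x / (p x * u0 x)))
        (at x within {x1..x2})"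
      using du1 vdu0 unz by simp
    show "\<forall>x\<in>{x1..x2}. ((\<lambda>x. u0 x * S2 x) has_vector_derivative
        (vector_derivative u0 (at x within {x1..x2}) / u0 x * (u0 x * S2 x) + T2 x / (p x * u0 x)))
        (at x within {x1..x2})"
      using du2 vdu0 unz by simp
    show "u0 x0 * S1 x0 = u0 x0" using S1x0 by simp
    show "vector_derivative (\<lambda>x. u0 x * S1 x) (at x0 within {x1..x2}) = vector_derivative u0 (at x0 within {x1..x2})"
      using vd_unique[OF x0I du1[OF x0I]] vdu0[OF x0I] S1x0 T1x0 by simp
    show "u0 x0 * S2 x0 = 0" using S2x0 by simp
    show "vector_derivative (\<lambda>x. u0 x * S2 x) (at x0 within {x1..x2}) = 1 / (p x0 * u0 x0)"
      using vd_unique[OF x0I du2[OF x0I]] S2x0 T2x0 by simp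
    show "\<forall>a b :: complex. (\<forall>x\<in>{x1..x2}. a * (u0 x * S1 x) + b * (u0 x * S2 x) = 0) \<longrightarrow> a = 0 \<and> b = 0"
    proof (intro allI impI)
      fix a b :: complex
      assume H: "\<forall>x\<in>{x1..x2}. a * (u0 x * S1 x) + b * (u0 x * S2 x) = 0"
      then have "a * (u0 x0 * S1 x0) + b * (u0 x0 * S2 x0) = 0" using x0I by blast
      then have "a * u0 x0 = 0" using S1x0 S2x0 by simp
      then have a0: "a = 0" using unz[OF x0I] by simp
      then have Z: "\<And>x. x \<in> I \<Longrightarrow> b * (u0 x * S2 x) = 0" using H by auto
      have d1: "((\<lambda>x. b * (u0 x * S2 x)) has_vector_derivative b * (y1 x0 * S2 x0 + T2 x0 / (p x0 * u0 x0))) (at x0 within I)"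
        by (intro has_vector_derivative_mult_right du2 x0I)
      have d2: "((\<lambda>x. b * (u0 x * S2 x)) has_vector_derivative 0) (at x0 within I)"
        by (rule has_vector_derivative_transform[OF x0I _ has_vector_derivative_const[where c=0]]) (use Z in auto)
      have "b * (y1 x0 * S2 x0 + T2 x0 / (p x0 * u0 x0)) = 0"
        using vd_unique[OF x0I d1] vd_unique[OF x0I d2] by simp
      then have "b / (p x0 * u0 x0) = 0" using S2x0 T2x0 by simp
      then have "b = 0" using pnz[OF x0I] unz[OF x0I] by simp
      then show "a = 0 \<and> b = 0" using a0 by simp
    qed
  qed
qed


end
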